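(* Let $A=(a_{nk})$ be an infinite complex matrix with $l_A\supseteq\phi$, and suppose that $D_p^qF(l_A)=l_A$. Then $A$ is $l$-replaceable if and only if $l_A\subseteq\sigma_p^q[s]$.
   Context: Fix sequences $p=(p(n))$, $q=(q(n))$ of nonnegative integers with $p(n)<q(n)$ for all $n$ and $q(n)\to\infty$. $\delta^j$ denotes the sequence with $1$ in position $j$ and $0$ elsewhere, and $\phi$ the linear span of all $\delta^j$. For a matrix $A$, $l_A=\{x : \sum_k a_{nk}x_k \text{ converges for each } n \text{ and } \sum_n|\sum_k a_{nk}x_k|<\infty\}$, an FK-space with its usual topology (seminorms $|x_n|$, $\sum_n|\sum_k a_{nk}x_k|$, $\sup_m|\sum_{k=1}^m a_{nk}x_k|$); $l_A'$ is its continuous dual. $A$ is called $l$-replaceable if there is a matrix $D=(d_{nk})$ with $l_D=l_A$ and $\sum_n d_{nk}=1$ for every $k$. $\sigma_p^q[s]=\{x : \lim_n \frac{1}{q(n)-p(n)}\sum_{k=p(n)+1}^{q(n)}\sum_{j=1}^k x_j \text{ exists}\}$. For an FK-space $X\supseteq\phi$: $D_p^qF^+(X)=\{x\in w : \lim_n \frac{1}{q(n)-p(n)}\sum_{k=p(n)+1}^{q(n)}\sum_{j=1}^k x_jf(\delta^j) \text{ exists for all } f\in X'\}$ and $D_p^qF(X)=D_p^qF^+(X)\cap X$, where $w$ is the space of all complex sequences. *)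

theory Defs
  imports Complex_Main
begin

text \<open>Conventions: sequences and matrices are indexed from 0, i.e. the paper's
  x_1, x_2, ... is represented by x 0, x 1, ...; similarly a_{nk} by A (n-1) (k-1).\<close>

type_synonym seq = "nat \<Rightarrow> complex"
type_synonym cmatrix = "nat \<Rightarrow> nat \<Rightarrow> complex"

definition delta :: "nat \<Rightarrow> seq" where
  "delta j = (\<lambda>i. if i = j then 1 else 0)"

definition phi :: "seq set" where
  "phi = {x. \<exists>F. finite F \<and> (\<forall>k. k \<notin> F \<longrightarrow> x k = 0)}"

definition lA :: "cmatrix \<Rightarrow> seq set" where
  "lA A = {x. (\<forall>n. summable (\<lambda>k. A n k * x k))
             \<and> summable (\<lambda>n. norm (\<Sum>k. A n k * x k))}"

text \<open>Index set of the defining seminorms of the FK topology of l_A.\<close>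
datatype semi_idx = Coord nat | Total | Row nat

definition seminorm_lA :: "cmatrix \<Rightarrow> semi_idx \<Rightarrow> seq \<Rightarrow> real" where
  "seminorm_lA A i x = (case i of
      Coord n \<Rightarrow> norm (x n)
    | Total \<Rightarrow> (\<Sum>n. norm (\<Sum>k. A n k * x k))
    | Row n \<Rightarrow> (SUP m. norm (\<Sum>k<m. A n k * x k)))"

text \<open>Continuous dual l_A': linear functionals on l_A that are continuous for the
  locally convex topology generated by the seminorms above (continuity at every
  point, with neighbourhoods given by finite intersections of seminorm balls).\<close>
definition lA_dual :: "cmatrix \<Rightarrow> (seq \<Rightarrow> complex) set" where
  "lA_dual A = {f.
     (\<forall>x\<in>lA A. \<forall>y\<in>lA A. f (\<lambda>k. x k + y k) = f x + f y)
   \<and> (\<forall>x\<in>lA A. \<forall>c. f (\<lambda>k. c * x k) = c * f x)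
   \<and> (\<forall>x\<in>lA A. \<forall>e>0. \<exists>S d. finite S \<and> d > 0 \<and>
        (\<forall>y\<in>lA A. (\<forall>i\<in>S. seminorm_lA A i (\<lambda>k. y k - x k) < d) \<longrightarrow> norm (f y - f x) < e))}"

definition l_replaceable :: "cmatrix \<Rightarrow> bool" where
  "l_replaceable A \<longleftrightarrow> (\<exists>D. lA D = lA A \<and> (\<forall>k. (\<lambda>n. D n k) sums 1))"

text \<open>Cesaro-type mean (1/(q n - p n)) sum_{k=p n+1}^{q n} sum_{j=1}^k y_j
  (paper indexing), with y_j = x_j f(delta^j) etc.\<close>
definition mean_pq :: "(nat \<Rightarrow> nat) \<Rightarrow> (nat \<Rightarrow> nat) \<Rightarrow> seq \<Rightarrow> nat \<Rightarrow> complex" where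
  "mean_pq p q y n = (1 / of_nat (q n - p n)) * (\<Sum>k\<in>{p n + 1..q n}. \<Sum>j<k. y j)"

definition sigma_pq_s :: "(nat \<Rightarrow> nat) \<Rightarrow> (nat \<Rightarrow> nat) \<Rightarrow> seq set" where
  "sigma_pq_s p q = {x. convergent (mean_pq p q x)}"

definition DF_plus_lA :: "(nat \<Rightarrow> nat) \<Rightarrow> (nat \<Rightarrow> nat) \<Rightarrow> cmatrix \<Rightarrow> seq set" where
  "DF_plus_lA p q A = {x. \<forall>f\<in>lA_dual A.
      convergent (mean_pq p q (\<lambda>j. x j * f (delta j)))}"

definition DF_lA :: "(nat \<Rightarrow> nat) \<Rightarrow> (nat \<Rightarrow> nat) \<Rightarrow> cmatrix \<Rightarrow> seq set" where
  "DF_lA p q A = DF_plus_lA p q A \<inter> lA A"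

end

theory Submission
  imports Defs "HOL-Analysis.Analysis" "HOL-Library.Countable"
begin

definition rs :: "cmatrix \<Rightarrow> nat \<Rightarrow> seq \<Rightarrow> complex" where
  "rs A n x = (\<Sum>k. A n k * x k)"

definition TT :: "cmatrix \<Rightarrow> seq \<Rightarrow> real" where
  "TT A x = (\<Sum>n. norm (rs A n x))"

definition RR :: "cmatrix \<Rightarrow> nat \<Rightarrow> seq \<Rightarrow> real" where
  "RR A n x = (SUP m. norm (\<Sum>k<m. A n k * x k))"

definition PP :: "cmatrix \<Rightarrow> nat \<Rightarrow> seq \<Rightarrow> real" where
  "PP A N x = (\<Sum>j<N. norm (x j)) + TT A x + (\<Sum>n<N. RR A n x)"

lemma lA_iff: "x \<in> lA A \<longleftrightarrow> (\<forall>n. summable (\<lambda>k. A n k * x k)) \<and> summable (\<lambda>n. norm (rs A n x))"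
  by (simp add: lA_def rs_def)

lemma lA_rows: "x \<in> lA A \<Longrightarrow> summable (\<lambda>k. A n k * x k)"
  by (simp add: lA_iff)

lemma lA_T: "x \<in> lA A \<Longrightarrow> summable (\<lambda>n. norm (rs A n x))"
  by (simp add: lA_iff)

lemma rs_add: "x \<in> lA A \<Longrightarrow> y \<in> lA A \<Longrightarrow> rs A n (\<lambda>k. x k + y k) = rs A n x + rs A n y"
  unfolding rs_def using lA_rows[of x A n] lA_rows[of y A n]
  by (simp add: distrib_left suminf_add)

lemma rs_scale: "x \<in> lA A \<Longrightarrow> rs A n (\<lambda>k. c * x k) = c * rs A n x"
  unfolding rs_def using lA_rows[of x A n]
  by (simp add: mult.left_commute suminf_mult)

lemma lA_add: assumes "x \<in> lA A" "y \<in> lA A" shows "(\<lambda>k. x k + y k) \<in> lA A"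
proof -
  have "summable (\<lambda>k. A n k * (x k + y k))" for n
    using summable_add[OF lA_rows[OF assms(1)] lA_rows[OF assms(2)], of n] by (simp add: distrib_left)
  moreover have "summable (\<lambda>n. norm (rs A n (\<lambda>k. x k + y k)))"
    using rs_add[OF assms]
    by (intro summable_comparison_test'[OF summable_add[OF lA_T[OF assms(1)] lA_T[OF assms(2)]]])
       (auto intro: norm_triangle_ineq)
  ultimately show ?thesis by (simp add: lA_iff)
qed

lemma lA_scale: assumes "x \<in> lA A" shows "(\<lambda>k. c * x k) \<in> lA A"
proof -
  have "summable (\<lambda>k. A n k * (c * x k))" for n
    using summable_mult[OF lA_rows[OF assms], of c n] by (simp add: mult.left_commute)
  moreover have "summable (\<lambda>n. norm (rs A n (\<lambda>k. c * x k)))"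
    using rs_scale[OF assms] summable_mult[OF lA_T[OF assms], of "norm c"] by (simp add: norm_mult)
  ultimately show ?thesis by (simp add: lA_iff)
qed

lemma lA_diff: assumes "x \<in> lA A" "y \<in> lA A" shows "(\<lambda>k. x k - y k) \<in> lA A"
  using lA_add[OF assms(1) lA_scale[OF assms(2), of "-1"]] by simp

lemma lA_zero: "(\<lambda>k. 0) \<in> lA A"
  by (simp add: lA_iff rs_def)

lemma rs_diff: assumes "x \<in> lA A" "y \<in> lA A" shows "rs A n (\<lambda>k. x k - y k) = rs A n x - rs A n y"
proof -
  have "rs A n (\<lambda>k. x k + (-1) * y k) = rs A n x + rs A n (\<lambda>k. (-1) * y k)"
    by (rule rs_add[OF assms(1) lA_scale[OF assms(2)]])
  then show ?thesis using rs_scale[OF assms(2), of n "-1"] by simp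
qed

lemma RR_bdd: assumes "x \<in> lA A" shows "bdd_above (range (\<lambda>m. norm (\<Sum>k<m. A n k * x k)))"
proof -
  have "convergent (\<lambda>m. \<Sum>k<m. A n k * x k)"
    using lA_rows[OF assms] summable_iff_convergent by blast
  then have "Bseq (\<lambda>m. \<Sum>k<m. A n k * x k)" by (rule convergent_imp_Bseq)
  then obtain K where "\<And>m. norm (\<Sum>k<m. A n k * x k) \<le> K" by (auto simp: Bseq_def)
  then show ?thesis by (auto simp: bdd_above_def)
qed

lemma RR_ge: "x \<in> lA A \<Longrightarrow> norm (\<Sum>k<m. A n k * x k) \<le> RR A n x"
  unfolding RR_def by (rule cSUP_upper[OF _ RR_bdd]) auto

lemma RR_nonneg: "x \<in> lA A \<Longrightarrow> 0 \<le> RR A n x"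
  using RR_ge[where m=0 and n=n] by (metis norm_ge_zero order_trans)

lemma RR_least: "(\<And>m. norm (\<Sum>k<m. A n k * x k) \<le> B) \<Longrightarrow> RR A n x \<le> B"
  unfolding RR_def by (rule cSUP_least) auto

lemma RR_add: assumes "x \<in> lA A" "y \<in> lA A"
  shows "RR A n (\<lambda>k. x k + y k) \<le> RR A n x + RR A n y"
proof (rule RR_least)
  fix m
  have "norm (\<Sum>k<m. A n k * (x k + y k)) = norm ((\<Sum>k<m. A n k * x k) + (\<Sum>k<m. A n k * y k))"
    by (simp add: distrib_left sum.distrib)
  also have "\<dots> \<le> RR A n x + RR A n y"
    by (rule order_trans[OF norm_triangle_ineq add_mono[OF RR_ge[OF assms(1)] RR_ge[OF assms(2)]]])
  finally show "norm (\<Sum>k<m. A n k * (x k + y k)) \<le> RR A n x + RR A n y" .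
qed

lemma RR_scale: assumes "x \<in> lA A"
  shows "RR A n (\<lambda>k. c * x k) = norm c * RR A n x"
proof -
  have eq: "norm (\<Sum>k<m. A n k * (c * x k)) = norm c * norm (\<Sum>k<m. A n k * x k)" for m
    by (simp add: sum_distrib_left[symmetric] norm_mult mult.left_commute)
  show ?thesis
  proof (cases "c = 0")
    case True then show ?thesis by (simp add: RR_def)
  next
    case False
    have "RR A n (\<lambda>k. c * x k) \<le> norm c * RR A n x"
      by (rule RR_least) (simp add: eq mult_left_mono RR_ge[OF assms])
    moreover have "norm c * RR A n x \<le> RR A n (\<lambda>k. c * x k)"
    proof -
      have "norm c * norm (\<Sum>k<m. A n k * x k) \<le> RR A n (\<lambda>k. c * x k)" for m
        using RR_ge[OF lA_scale[OF assms, of c], where m=m and n=n] by (simp only: eq)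
      then have "RR A n x \<le> RR A n (\<lambda>k. c * x k) / norm c"
        using False by (intro RR_least) (simp add: field_simps)
      then show ?thesis using False by (simp add: field_simps)
    qed
    ultimately show ?thesis by simp
  qed
qed

lemma RR_rs: assumes "x \<in> lA A" shows "norm (rs A n x) \<le> RR A n x"
proof -
  have "(\<lambda>m. norm (\<Sum>k<m. A n k * x k)) \<longlonglongrightarrow> norm (rs A n x)"
    unfolding rs_def by (intro tendsto_norm summable_LIMSEQ lA_rows[OF assms])
  then show ?thesis
    by (rule tendsto_le[OF trivial_limit_sequentially tendsto_const]) (intro always_eventually allI RR_ge[OF assms])
qed

lemma TT_nonneg: "x \<in> lA A \<Longrightarrow> 0 \<le> TT A x"
  unfolding TT_def by (intro suminf_nonneg lA_T) auto

lemma TT_add: assumes "x \<in> lA A" "y \<in> lA A"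
  shows "TT A (\<lambda>k. x k + y k) \<le> TT A x + TT A y"
proof -
  have "TT A (\<lambda>k. x k + y k) \<le> (\<Sum>n. norm (rs A n x) + norm (rs A n y))"
    unfolding TT_def
    by (intro suminf_le lA_T[OF lA_add[OF assms]] summable_add lA_T assms)
       (simp add: rs_add[OF assms] norm_triangle_ineq)
  also have "\<dots> = TT A x + TT A y"
    unfolding TT_def by (intro suminf_add[symmetric] lA_T assms)
  finally show ?thesis .
qed

lemma TT_scale: assumes "x \<in> lA A" shows "TT A (\<lambda>k. c * x k) = norm c * TT A x"
  unfolding TT_def using lA_T[OF assms]
  by (simp add: rs_scale[OF assms] norm_mult suminf_mult)

lemma TT_rs: assumes "x \<in> lA A" shows "norm (rs A n x) \<le> TT A x"
  unfolding TT_def using sum_le_suminf[OF lA_T[OF assms], of "{n}"] by simp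


lemma PP_nonneg: "x \<in> lA A \<Longrightarrow> 0 \<le> PP A N x"
  unfolding PP_def by (intro add_nonneg_nonneg sum_nonneg TT_nonneg RR_nonneg) auto

lemma PP_add: assumes "x \<in> lA A" "y \<in> lA A"
  shows "PP A N (\<lambda>k. x k + y k) \<le> PP A N x + PP A N y"
proof -
  have "(\<Sum>j<N. norm (x j + y j)) \<le> (\<Sum>j<N. norm (x j)) + (\<Sum>j<N. norm (y j))"
    by (simp add: sum.distrib[symmetric] sum_mono norm_triangle_ineq)
  moreover have "(\<Sum>n<N. RR A n (\<lambda>k. x k + y k)) \<le> (\<Sum>n<N. RR A n x) + (\<Sum>n<N. RR A n y)"
    by (simp add: sum.distrib[symmetric] sum_mono RR_add[OF assms])
  ultimately show ?thesis unfolding PP_def using TT_add[OF assms] by linarith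
qed

lemma PP_scale: assumes "x \<in> lA A" shows "PP A N (\<lambda>k. c * x k) = norm c * PP A N x"
  unfolding PP_def by (simp add: TT_scale[OF assms] RR_scale[OF assms] norm_mult
      sum_distrib_left distrib_left)

lemma PP_mono: assumes "x \<in> lA A" "N \<le> M" shows "PP A N x \<le> PP A M x"
proof -
  have "(\<Sum>j<N. norm (x j)) \<le> (\<Sum>j<M. norm (x j))"
    using assms(2) by (intro sum_mono2) auto
  moreover have "(\<Sum>n<N. RR A n x) \<le> (\<Sum>n<M. RR A n x)"
    using assms by (intro sum_mono2 RR_nonneg) auto
  ultimately show ?thesis unfolding PP_def by linarith
qed

lemma PP_coord: assumes "x \<in> lA A" "j < N" shows "norm (x j) \<le> PP A N x"
proof -
  have "norm (x j) \<le> (\<Sum>j<N. norm (x j))"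
    using assms(2) by (intro member_le_sum) auto
  moreover have "0 \<le> (\<Sum>n<N. RR A n x)" by (intro sum_nonneg RR_nonneg assms(1))
  ultimately show ?thesis unfolding PP_def using TT_nonneg[OF assms(1)] by linarith
qed

lemma PP_TT: assumes "x \<in> lA A" shows "TT A x \<le> PP A N x"
proof -
  have "0 \<le> (\<Sum>n<N. RR A n x)" by (intro sum_nonneg RR_nonneg assms(1))
  moreover have "0 \<le> (\<Sum>j<N. norm (x j))" by (intro sum_nonneg) auto
  ultimately show ?thesis unfolding PP_def by linarith
qed

lemma PP_RR: assumes "x \<in> lA A" "n < N" shows "RR A n x \<le> PP A N x"
proof -
  have "RR A n x \<le> (\<Sum>n<N. RR A n x)"
    using assms by (intro member_le_sum RR_nonneg) auto
  moreover have "0 \<le> (\<Sum>j<N. norm (x j))" by (intro sum_nonneg) auto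
  ultimately show ?thesis unfolding PP_def using TT_nonneg[OF assms(1)] by linarith
qed

lemma PP_neg: assumes "x \<in> lA A" shows "PP A N (\<lambda>k. - x k) = PP A N x"
  using PP_scale[OF assms, of N "-1"] by simp

lemma PP_sym: assumes "x \<in> lA A" "y \<in> lA A"
  shows "PP A N (\<lambda>k. x k - y k) = PP A N (\<lambda>k. y k - x k)"
  using PP_neg[OF lA_diff[OF assms(2,1)], of N] by simp

lemma PP_zero: "PP A N (\<lambda>k. 0) = 0"
  using PP_scale[OF lA_zero, of A N 0] by simp

lemma seminorm_Coord: "seminorm_lA A (Coord j) z = norm (z j)"
  by (simp add: seminorm_lA_def)
lemma seminorm_Total: "seminorm_lA A Total z = TT A z"
  by (simp add: seminorm_lA_def TT_def rs_def)
lemma seminorm_Row: "seminorm_lA A (Row n) z = RR A n z"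
  by (simp add: seminorm_lA_def RR_def)

lemma bounded_in_dual:
  assumes add: "\<And>x y. x \<in> lA A \<Longrightarrow> y \<in> lA A \<Longrightarrow> f (\<lambda>k. x k + y k) = f x + f y"
    and hom: "\<And>x c. x \<in> lA A \<Longrightarrow> f (\<lambda>k. c * x k) = c * f x"
    and bnd: "\<And>x. x \<in> lA A \<Longrightarrow> norm (f x) \<le> C * PP A N x"
  shows "f \<in> lA_dual A"
proof -
  have cont: "\<exists>S d. finite S \<and> d > 0 \<and>
        (\<forall>y\<in>lA A. (\<forall>i\<in>S. seminorm_lA A i (\<lambda>k. y k - x k) < d) \<longrightarrow> norm (f y - f x) < e)"
    if x: "x \<in> lA A" and e: "e > 0" for x e
  proof -
    define C' where "C' = \<bar>C\<bar> + 1"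
    define S where "S = Coord ` {..<N} \<union> {Total} \<union> Row ` {..<N}"
    define d where "d = e / (C' * (2 * real N + 1))"
    have C'pos: "C' > 0" by (simp add: C'_def)
    have dpos: "d > 0" using e C'pos by (simp add: d_def)
    have "norm (f y - f x) < e"
      if y: "y \<in> lA A" and small: "\<forall>i\<in>S. seminorm_lA A i (\<lambda>k. y k - x k) < d" for y
    proof -
      define z where "z = (\<lambda>k. y k - x k)"
      have z: "z \<in> lA A" unfolding z_def by (rule lA_diff[OF y x])
      have yxz: "y = (\<lambda>k. x k + z k)" by (simp add: z_def)
      have fz: "f y - f x = f z" unfolding yxz using add[OF x z] by simp
      have c1: "norm (z j) < d" if "j < N" for j
      proof -
        have m: "Coord j \<in> S" using that by (simp add: S_def)
        show ?thesis using small[rule_format, OF m] by (simp add: seminorm_Coord z_def)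
      qed
      have c2: "TT A z < d"
      proof -
        have m: "Total \<in> S" by (simp add: S_def)
        show ?thesis using small[rule_format, OF m] by (simp add: seminorm_Total z_def)
      qed
      have c3: "RR A n z < d" if "n < N" for n
      proof -
        have m: "Row n \<in> S" using that by (simp add: S_def)
        show ?thesis using small[rule_format, OF m] by (simp add: seminorm_Row z_def)
      qed
      have "(\<Sum>j<N. norm (z j)) \<le> (\<Sum>j<N. d)" by (intro sum_mono less_imp_le c1) auto
      moreover have "(\<Sum>n<N. RR A n z) \<le> (\<Sum>n<N. d)" by (intro sum_mono less_imp_le c3) auto
      ultimately have "PP A N z < (2 * real N + 1) * d"
        unfolding PP_def using c2 by (simp add: algebra_simps)
      moreover have "norm (f z) \<le> C' * PP A N z"
      proof -
        have "C * PP A N z \<le> C' * PP A N z"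
          using PP_nonneg[OF z, of N] unfolding C'_def by (intro mult_right_mono) auto
        then show ?thesis using bnd[OF z] by linarith
      qed
      ultimately have "norm (f z) < C' * ((2 * real N + 1) * d)"
        using C'pos by (meson mult_strict_left_mono order_le_less_trans)
      also have "\<dots> = e"
      proof -
        have "C' * (2 * real N + 1) > 0" using C'pos by simp
        then have "(C' * (2 * real N + 1)) * (e / (C' * (2 * real N + 1))) = e" using C'pos by (metis nonzero_mult_div_cancel_left less_irrefl times_divide_eq_right)
        then show ?thesis unfolding d_def by (simp only: mult.assoc)
      qed
      finally show ?thesis using fz by simp
    qed
    moreover have "finite S" by (simp add: S_def)
    ultimately show ?thesis using dpos by blast
  qed
  show ?thesis unfolding lA_dual_def mem_Collect_eq
    by (intro conjI ballI allI impI add hom cont)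
qed


definition dd :: "cmatrix \<Rightarrow> seq \<Rightarrow> seq \<Rightarrow> real" where
  "dd A x y = (if x \<in> lA A \<and> y \<in> lA A
      then (\<Sum>N. (1/2)^N * min 1 (PP A N (\<lambda>k. x k - y k))) else 0)"

lemma geo_summable_bounded:
  assumes "\<And>N. 0 \<le> g N" "\<And>N. g N \<le> 1"
  shows "summable (\<lambda>N. (1/2::real)^N * g N)"
proof (rule summable_comparison_test'[OF summable_geometric[of "1/2::real"]])
  fix N :: nat
  show "norm ((1/2::real)^N * g N) \<le> (1/2)^N"
    using assms[of N] by (simp add: abs_mult mult_left_le)
qed simp

lemma dd_summable: assumes "x \<in> lA A" "y \<in> lA A"
  shows "summable (\<lambda>N. (1/2::real)^N * min 1 (PP A N (\<lambda>k. x k - y k)))"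
  using PP_nonneg[OF lA_diff[OF assms]] by (intro geo_summable_bounded) auto

lemma dd_eq: "x \<in> lA A \<Longrightarrow> y \<in> lA A \<Longrightarrow>
   dd A x y = (\<Sum>N. (1/2)^N * min 1 (PP A N (\<lambda>k. x k - y k)))"
  by (simp add: dd_def)

lemma dd_term_le: assumes "x \<in> lA A" "y \<in> lA A"
  shows "(1/2)^N * min 1 (PP A N (\<lambda>k. x k - y k)) \<le> dd A x y"
  unfolding dd_eq[OF assms]
  using sum_le_suminf[OF dd_summable[OF assms], of "{N}"] PP_nonneg[OF lA_diff[OF assms]]
  by simp

lemma dd_small: assumes "x \<in> lA A" "y \<in> lA A" "dd A x y < (1/2)^N * e" "e \<le> 1"
  shows "PP A N (\<lambda>k. x k - y k) < e"
proof -
  have "(1/2)^N * min 1 (PP A N (\<lambda>k. x k - y k)) < (1/2)^N * e"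
    using dd_term_le[OF assms(1,2), of N] assms(3) by linarith
  then have "min 1 (PP A N (\<lambda>k. x k - y k)) < e"
    by (simp add: mult_less_cancel_left_pos)
  then show ?thesis using assms(4) by linarith
qed

lemma dd_bound: assumes "x \<in> lA A" "y \<in> lA A"
  shows "dd A x y \<le> 2 * PP A N (\<lambda>k. x k - y k) + (1/2)^N"
proof -
  define f where "f = (\<lambda>M. (1/2::real)^M * min 1 (PP A M (\<lambda>k. x k - y k)))"
  have z: "(\<lambda>k. x k - y k) \<in> lA A" by (rule lA_diff[OF assms])
  have sf: "summable f" unfolding f_def by (rule dd_summable[OF assms])
  have "dd A x y = (\<Sum>M. f (M + Suc N)) + (\<Sum>i<Suc N. f i)"
    unfolding dd_eq[OF assms] f_def[symmetric] by (rule suminf_split_initial_segment[OF sf])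
  moreover have "(\<Sum>M. f (M + Suc N)) \<le> (\<Sum>M. (1/2)^(M + Suc N))"
  proof (rule suminf_le)
    show "summable (\<lambda>M. f (M + Suc N))" by (rule summable_iff_shift[THEN iffD2, OF sf])
    show "summable (\<lambda>M. (1/2::real)^(M + Suc N))"
      by (simp add: power_add summable_mult2 summable_geometric)
    fix M show "f (M + Suc N) \<le> (1/2)^(M + Suc N)"
      unfolding f_def by (simp add: mult_left_le)
  qed
  moreover have "(\<Sum>M. (1/2::real)^(M + Suc N)) = (1/2)^N"
  proof -
    have "(\<Sum>M. (1/2::real)^(M + Suc N)) = (\<Sum>M. (1/2)^M * (1/2)^(Suc N))"
      by (simp add: power_add)
    also have "\<dots> = (\<Sum>M. (1/2::real)^M) * (1/2)^(Suc N)"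
      by (rule suminf_mult2[symmetric]) (simp add: summable_geometric)
    also have "\<dots> = (1/2)^N" by (simp add: suminf_geometric)
    finally show ?thesis .
  qed
  moreover have "(\<Sum>i<Suc N. f i) \<le> (\<Sum>i<Suc N. (1/2)^i * PP A N (\<lambda>k. x k - y k))"
  proof (rule sum_mono)
    fix i assume "i \<in> {..<Suc N}"
    then have "PP A i (\<lambda>k. x k - y k) \<le> PP A N (\<lambda>k. x k - y k)"
      by (intro PP_mono z) auto
    then show "f i \<le> (1/2)^i * PP A N (\<lambda>k. x k - y k)"
      unfolding f_def by (intro mult_left_mono) auto
  qed
  moreover have "(\<Sum>i<Suc N. (1/2::real)^i * PP A N (\<lambda>k. x k - y k)) \<le> 2 * PP A N (\<lambda>k. x k - y k)"
  proof -
    have "(\<Sum>i<Suc N. (1/2::real)^i) \<le> 2"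
    proof -
      have "(\<Sum>i<Suc N. (1/2::real)^i) \<le> (\<Sum>i. (1/2)^i)"
        by (intro sum_le_suminf summable_geometric) auto
      also have "\<dots> = 2" by (simp add: suminf_geometric)
      finally show ?thesis .
    qed
    then show ?thesis using PP_nonneg[OF z, of N]
      by (simp add: sum_distrib_right[symmetric] mult_right_mono)
  qed
  ultimately show ?thesis by linarith
qed

lemma min_sub: "(a::real) \<le> b + c \<Longrightarrow> 0 \<le> b \<Longrightarrow> 0 \<le> c \<Longrightarrow> min 1 a \<le> min 1 b + min 1 c"
  by linarith

lemma dd_metric: "Metric_space (lA A) (dd A)"
proof
  fix x y
  show "0 \<le> dd A x y"
    unfolding dd_def using dd_summable[of x A y] PP_nonneg[OF lA_diff, of x A y]
    by (auto intro!: suminf_nonneg)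
  show "dd A x y = dd A y x"
    unfolding dd_def using PP_sym[of x A y] by auto
next
  fix x y assume x: "x \<in> lA A" and y: "y \<in> lA A"
  have z: "(\<lambda>k. x k - y k) \<in> lA A" by (rule lA_diff[OF x y])
  show "dd A x y = 0 \<longleftrightarrow> x = y"
  proof
    assume "x = y" then show "dd A x y = 0" using dd_eq[OF y y] by (simp add: PP_zero)
  next
    assume h: "dd A x y = 0"
    have "\<forall>N. (1/2::real)^N * min 1 (PP A N (\<lambda>k. x k - y k)) = 0"
      using h unfolding dd_eq[OF x y]
      using suminf_eq_zero_iff[OF dd_summable[OF x y]] PP_nonneg[OF z] by auto
    then have P0: "PP A N (\<lambda>k. x k - y k) = 0" for N
      using PP_nonneg[OF z, of N] by (auto simp: min_def split: if_splits)
    show "x = y"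
    proof
      fix j
      have "norm (x j - y j) \<le> 0" using PP_coord[OF z, of j "Suc j"] P0[of "Suc j"] by simp
      then show "x j = y j" by simp
    qed
  qed
next
  fix x y z assume x: "x \<in> lA A" and y: "y \<in> lA A" and z: "z \<in> lA A"
  have "dd A x z \<le> (\<Sum>N. (1/2::real)^N * min 1 (PP A N (\<lambda>k. x k - y k))
                      + (1/2)^N * min 1 (PP A N (\<lambda>k. y k - z k)))"
    unfolding dd_eq[OF x z]
  proof (rule suminf_le)
    fix N
    have "(\<lambda>k. x k - z k) = (\<lambda>k. (x k - y k) + (y k - z k))" by simp
    then have "PP A N (\<lambda>k. x k - z k) \<le> PP A N (\<lambda>k. x k - y k) + PP A N (\<lambda>k. y k - z k)"
      using PP_add[OF lA_diff[OF x y] lA_diff[OF y z], of N] by simp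
    then have "min 1 (PP A N (\<lambda>k. x k - z k)) \<le> min 1 (PP A N (\<lambda>k. x k - y k)) + min 1 (PP A N (\<lambda>k. y k - z k))"
      by (intro min_sub PP_nonneg lA_diff x y z)
    then show "(1/2::real)^N * min 1 (PP A N (\<lambda>k. x k - z k)) \<le>
       (1/2)^N * min 1 (PP A N (\<lambda>k. x k - y k)) + (1/2)^N * min 1 (PP A N (\<lambda>k. y k - z k))"
      by (simp add: distrib_left[symmetric] mult_left_mono)
  qed (intro dd_summable summable_add x y z)+
  also have "\<dots> = dd A x y + dd A y z"
    unfolding dd_eq[OF x y] dd_eq[OF y z] by (intro suminf_add[symmetric] dd_summable x y z)
  finally show "dd A x z \<le> dd A x y + dd A y z" .
qed


lemma tends0I:
  fixes f :: "nat \<Rightarrow> real"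
  assumes "\<And>i. 0 \<le> f i" "\<And>e. e > 0 \<Longrightarrow> \<exists>I. \<forall>i\<ge>I. f i \<le> e"
  shows "f \<longlonglongrightarrow> 0"
proof (rule LIMSEQ_I)
  fix r :: real assume "0 < r"
  then obtain I where "\<forall>i\<ge>I. f i \<le> r/2" using assms(2)[of "r/2"] by auto
  show "\<exists>no. \<forall>n\<ge>no. norm (f n - 0) < r"
  proof (intro exI allI impI)
    fix n assume "n \<ge> I"
    then have "f n \<le> r/2" using \<open>\<forall>i\<ge>I. f i \<le> r/2\<close> by blast
    then show "norm (f n - 0) < r" using assms(1)[of n] \<open>0 < r\<close> by simp
  qed
qed

lemma norm3: "norm ((a::'a::real_normed_vector) - b) \<le> norm (u - a) + norm (u - v) + norm (v - b)"
proof -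
  have "a - b = (u - v) + (v - b) - (u - a)" by (simp add: algebra_simps)
  then have "norm (a - b) \<le> norm ((u - v) + (v - b)) + norm (u - a)"
    by (metis norm_triangle_ineq4)
  also have "\<dots> \<le> norm (u - v) + norm (v - b) + norm (u - a)"
    by (rule add_right_mono[OF norm_triangle_ineq])
  finally show ?thesis by simp
qed

lemma lA_complete_core:
  assumes sX: "\<And>i. s i \<in> lA A"
   and cau: "\<And>N e. e > 0 \<Longrightarrow> \<exists>I. \<forall>i\<ge>I. \<forall>l\<ge>I. PP A N (\<lambda>k. s i k - s l k) < e"
  shows "\<exists>x\<in>lA A. \<forall>N. (\<lambda>i. PP A N (\<lambda>k. s i k - x k)) \<longlonglongrightarrow> 0"
proof -
  have dX: "(\<lambda>k. s i k - s l k) \<in> lA A" for i l by (intro lA_diff sX)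
  have "convergent (\<lambda>i. s i j)" for j
  proof -
    have "Cauchy (\<lambda>i. s i j)"
    proof (rule CauchyI)
      fix e :: real assume "e > 0"
      then obtain I where I: "\<forall>i\<ge>I. \<forall>l\<ge>I. PP A (Suc j) (\<lambda>k. s i k - s l k) < e"
        using cau by blast
      show "\<exists>M. \<forall>m\<ge>M. \<forall>n\<ge>M. norm (s m j - s n j) < e"
        using I PP_coord[OF dX, of j "Suc j"] by (meson le_less_trans lessI)
    qed
    then show ?thesis by (simp add: Cauchy_convergent_iff)
  qed
  then obtain x where xj: "\<And>j. (\<lambda>i. s i j) \<longlonglongrightarrow> x j"
    unfolding convergent_def by metis
  have U: "\<exists>I. \<forall>i\<ge>I. \<forall>m. norm ((\<Sum>k<m. A n k * s i k) - (\<Sum>k<m. A n k * x k)) \<le> e"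
    if "e > 0" for n e
  proof -
    obtain I where I: "\<forall>i\<ge>I. \<forall>l\<ge>I. PP A (Suc n) (\<lambda>k. s i k - s l k) < e"
      using cau \<open>e > 0\<close> by blast
    have "norm ((\<Sum>k<m. A n k * s i k) - (\<Sum>k<m. A n k * x k)) \<le> e" if i: "i \<ge> I" for i m
    proof -
      have lim: "(\<lambda>l. (\<Sum>k<m. A n k * s i k) - (\<Sum>k<m. A n k * s l k))
          \<longlonglongrightarrow> (\<Sum>k<m. A n k * s i k) - (\<Sum>k<m. A n k * x k)"
        by (intro tendsto_diff tendsto_const tendsto_sum tendsto_mult xj)
      have "norm ((\<Sum>k<m. A n k * s i k) - (\<Sum>k<m. A n k * s l k)) \<le> e" if "l \<ge> I" for l
      proof -
        have "(\<Sum>k<m. A n k * s i k) - (\<Sum>k<m. A n k * s l k) = (\<Sum>k<m. A n k * (s i k - s l k))"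
          by (simp add: sum_subtractf right_diff_distrib)
        moreover have "norm (\<Sum>k<m. A n k * (s i k - s l k)) \<le> RR A n (\<lambda>k. s i k - s l k)"
          by (rule RR_ge[OF dX])
        moreover have "RR A n (\<lambda>k. s i k - s l k) \<le> PP A (Suc n) (\<lambda>k. s i k - s l k)"
          by (rule PP_RR[OF dX]) simp
        ultimately show ?thesis using I i that by fastforce
      qed
      then show ?thesis
        by (intro Lim_bounded[OF tendsto_norm[OF lim], of I]) auto
    qed
    then show ?thesis by blast
  qed
  have rowx: "summable (\<lambda>k. A n k * x k)" for n
  proof -
    have "Cauchy (\<lambda>m. \<Sum>k<m. A n k * x k)"
    proof (rule CauchyI)
      fix e :: real assume "e > 0"
      then obtain I where I: "\<forall>i\<ge>I. \<forall>m. norm ((\<Sum>k<m. A n k * s i k) - (\<Sum>k<m. A n k * x k)) \<le> e/3"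
        using U[of "e/3" n] by auto
      have "Cauchy (\<lambda>m. \<Sum>k<m. A n k * s I k)"
        using lA_rows[OF sX[of I], of n] by (simp add: summable_iff_convergent Cauchy_convergent_iff)
      then obtain M where M: "\<forall>m\<ge>M. \<forall>m'\<ge>M. norm ((\<Sum>k<m. A n k * s I k) - (\<Sum>k<m'. A n k * s I k)) < e/3"
        using \<open>e > 0\<close> unfolding Cauchy_iff by (meson divide_pos_pos zero_less_numeral)
      show "\<exists>M. \<forall>m\<ge>M. \<forall>m'\<ge>M. norm ((\<Sum>k<m. A n k * x k) - (\<Sum>k<m'. A n k * x k)) < e"
      proof (intro exI allI impI)
        fix m m' assume "m \<ge> M" "m' \<ge> M"
        have "norm ((\<Sum>k<m. A n k * x k) - (\<Sum>k<m'. A n k * x k)) \<le>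
          norm ((\<Sum>k<m. A n k * s I k) - (\<Sum>k<m. A n k * x k)) +
          norm ((\<Sum>k<m. A n k * s I k) - (\<Sum>k<m'. A n k * s I k)) +
          norm ((\<Sum>k<m'. A n k * s I k) - (\<Sum>k<m'. A n k * x k))"
          by (rule norm3)
        moreover have "norm ((\<Sum>k<m. A n k * s I k) - (\<Sum>k<m. A n k * x k)) \<le> e/3"
          using I by blast
        moreover have "norm ((\<Sum>k<m'. A n k * s I k) - (\<Sum>k<m'. A n k * x k)) \<le> e/3"
          using I by blast
        moreover have "norm ((\<Sum>k<m. A n k * s I k) - (\<Sum>k<m'. A n k * s I k)) < e/3"
          using M \<open>m \<ge> M\<close> \<open>m' \<ge> M\<close> by blast
        ultimately show "norm ((\<Sum>k<m. A n k * x k) - (\<Sum>k<m'. A n k * x k)) < e"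
          by linarith
      qed
    qed
    then show ?thesis by (simp add: summable_iff_convergent Cauchy_convergent_iff)
  qed
  have R: "\<exists>I. \<forall>i\<ge>I. norm (rs A n (s i) - rs A n x) \<le> e" if "e > 0" for n e
  proof -
    obtain I where I: "\<forall>i\<ge>I. \<forall>m. norm ((\<Sum>k<m. A n k * s i k) - (\<Sum>k<m. A n k * x k)) \<le> e"
      using U[OF \<open>e > 0\<close>, of n] by auto
    have "norm (rs A n (s i) - rs A n x) \<le> e" if "i \<ge> I" for i
    proof -
      have lim: "(\<lambda>m. (\<Sum>k<m. A n k * s i k) - (\<Sum>k<m. A n k * x k)) \<longlonglongrightarrow> rs A n (s i) - rs A n x"
        unfolding rs_def by (intro tendsto_diff summable_LIMSEQ rowx lA_rows[OF sX])
      have "\<forall>m\<ge>0. norm ((\<Sum>k<m. A n k * s i k) - (\<Sum>k<m. A n k * x k)) \<le> e"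
        using I that by blast
      then show ?thesis by (rule Lim_bounded[OF tendsto_norm[OF lim]])
    qed
    then show ?thesis by blast
  qed
  have rsconv: "(\<lambda>i. rs A n (s i)) \<longlonglongrightarrow> rs A n x" for n
  proof (rule LIMSEQ_I)
    fix r :: real assume "0 < r"
    then obtain I where "\<forall>i\<ge>I. norm (rs A n (s i) - rs A n x) \<le> r/2" using R[of "r/2" n] by auto
    moreover have "r/2 < r" using \<open>0 < r\<close> by simp
    ultimately show "\<exists>no. \<forall>i\<ge>no. norm (rs A n (s i) - rs A n x) < r"
      by (meson le_less_trans)
  qed
  have T: "\<exists>I. \<forall>i\<ge>I. summable (\<lambda>n. norm (rs A n (s i) - rs A n x))
                 \<and> (\<Sum>n. norm (rs A n (s i) - rs A n x)) \<le> e" if "e > 0" for e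
  proof -
    obtain I where I: "\<forall>i\<ge>I. \<forall>l\<ge>I. PP A 0 (\<lambda>k. s i k - s l k) < e"
      using cau \<open>e > 0\<close> by blast
    have fin: "(\<Sum>n<K. norm (rs A n (s i) - rs A n x)) \<le> e" if i: "i \<ge> I" for i K
    proof -
      have "(\<Sum>n<K. norm (rs A n (s i) - rs A n (s l))) \<le> e" if l: "l \<ge> I" for l
      proof -
        have "(\<Sum>n<K. norm (rs A n (s i) - rs A n (s l))) = (\<Sum>n<K. norm (rs A n (\<lambda>k. s i k - s l k)))"
          by (simp add: rs_diff[OF sX sX])
        also have "\<dots> \<le> TT A (\<lambda>k. s i k - s l k)"
          unfolding TT_def by (intro sum_le_suminf lA_T dX) auto
        also have "\<dots> \<le> PP A 0 (\<lambda>k. s i k - s l k)" by (rule PP_TT[OF dX])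
        finally show ?thesis using I i l by fastforce
      qed
      moreover have "(\<lambda>l. \<Sum>n<K. norm (rs A n (s i) - rs A n (s l))) \<longlonglongrightarrow> (\<Sum>n<K. norm (rs A n (s i) - rs A n x))"
        by (intro tendsto_sum tendsto_norm tendsto_diff tendsto_const rsconv)
      ultimately show ?thesis by (intro Lim_bounded[of _ _ I]) auto
    qed
    have "summable (\<lambda>n. norm (rs A n (s i) - rs A n x)) \<and> (\<Sum>n. norm (rs A n (s i) - rs A n x)) \<le> e"
      if "i \<ge> I" for i
    proof
      show sm: "summable (\<lambda>n. norm (rs A n (s i) - rs A n x))"
        by (rule summableI_nonneg_bounded[of _ e]) (use fin that in auto)
      show "(\<Sum>n. norm (rs A n (s i) - rs A n x)) \<le> e"
        by (rule suminf_le_const[OF sm]) (use fin that in auto)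
    qed
    then show ?thesis by blast
  qed
  have xX: "x \<in> lA A"
  proof -
    obtain I where I: "\<forall>i\<ge>I. summable (\<lambda>n. norm (rs A n (s i) - rs A n x))"
      using T[of 1] by auto
    have "summable (\<lambda>n. norm (rs A n (s I)) + norm (rs A n (s I) - rs A n x))"
      using I by (intro summable_add lA_T sX) auto
    then have "summable (\<lambda>n. norm (rs A n x))"
      by (rule summable_comparison_test'[of _ 0])
         (simp, metis norm_minus_commute norm_triangle_sub add.commute)
    then show ?thesis using rowx by (simp add: lA_iff)
  qed
  have eX: "(\<lambda>k. s i k - x k) \<in> lA A" for i by (intro lA_diff sX xX)
  have "(\<lambda>i. PP A N (\<lambda>k. s i k - x k)) \<longlonglongrightarrow> 0" for N
  proof -
    have c1: "(\<lambda>i. \<Sum>j<N. norm (s i j - x j)) \<longlonglongrightarrow> 0"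
    proof (rule tendsto_null_sum)
      fix j
      have "(\<lambda>i. s i j - x j) \<longlonglongrightarrow> 0"
        using tendsto_diff[OF xj[of j] tendsto_const[of "x j"]] by simp
      then show "(\<lambda>i. norm (s i j - x j)) \<longlonglongrightarrow> 0" by (rule tendsto_norm_zero)
    qed
    have c2: "(\<lambda>i. TT A (\<lambda>k. s i k - x k)) \<longlonglongrightarrow> 0"
    proof (rule tends0I)
      show "0 \<le> TT A (\<lambda>k. s i k - x k)" for i by (rule TT_nonneg[OF eX])
      fix e :: real assume "e > 0"
      then obtain I where "\<forall>i\<ge>I. (\<Sum>n. norm (rs A n (s i) - rs A n x)) \<le> e"
        using T by blast
      then show "\<exists>I. \<forall>i\<ge>I. TT A (\<lambda>k. s i k - x k) \<le> e"
        by (auto simp: TT_def rs_diff[OF sX xX])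
    qed
    have c3: "(\<lambda>i. \<Sum>n<N. RR A n (\<lambda>k. s i k - x k)) \<longlonglongrightarrow> 0"
    proof (rule tendsto_null_sum)
      fix n
      show "(\<lambda>i. RR A n (\<lambda>k. s i k - x k)) \<longlonglongrightarrow> 0"
      proof (rule tends0I)
        show "0 \<le> RR A n (\<lambda>k. s i k - x k)" for i by (rule RR_nonneg[OF eX])
        fix e :: real assume "e > 0"
        then obtain I where I: "\<forall>i\<ge>I. \<forall>m. norm ((\<Sum>k<m. A n k * s i k) - (\<Sum>k<m. A n k * x k)) \<le> e"
          using U by blast
        have "RR A n (\<lambda>k. s i k - x k) \<le> e" if "i \<ge> I" for i
        proof (rule RR_least)
          fix m
          have "(\<Sum>k<m. A n k * (s i k - x k)) = (\<Sum>k<m. A n k * s i k) - (\<Sum>k<m. A n k * x k)"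
            by (simp add: sum_subtractf right_diff_distrib)
          then show "norm (\<Sum>k<m. A n k * (s i k - x k)) \<le> e" using I that by simp
        qed
        then show "\<exists>I. \<forall>i\<ge>I. RR A n (\<lambda>k. s i k - x k) \<le> e" by blast
      qed
    qed
    show ?thesis unfolding PP_def using tendsto_add[OF tendsto_add[OF c1 c2] c3] by simp
  qed
  then show ?thesis using xX by blast
qed


lemma half_pow_small: "(r::real) > 0 \<Longrightarrow> \<exists>N. (1/2::real)^N < r"
proof -
  assume "r > 0"
  have "((\<lambda>N. (1/2::real)^N) \<longlongrightarrow> 0) sequentially" by (rule LIMSEQ_power_zero) simp
  then have "eventually (\<lambda>N. (1/2::real)^N < r) sequentially"
    using \<open>r > 0\<close> by (rule order_tendstoD(2))
  then show ?thesis by (auto simp: eventually_sequentially)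
qed

lemma lA_mcomplete: "Metric_space.mcomplete (lA A) (dd A)"
proof -
  interpret M: Metric_space "lA A" "dd A" by (rule dd_metric)
  show ?thesis unfolding M.mcomplete_def
  proof (intro allI impI)
    fix s assume "M.MCauchy s"
    then have sX: "\<And>i. s i \<in> lA A" and sc: "\<And>e. e > 0 \<Longrightarrow> \<exists>N. \<forall>n n'. N \<le> n \<longrightarrow> N \<le> n' \<longrightarrow> dd A (s n) (s n') < e"
      unfolding M.MCauchy_def by auto
    have cau: "\<exists>I. \<forall>i\<ge>I. \<forall>l\<ge>I. PP A N (\<lambda>k. s i k - s l k) < e" if "e > 0" for N e
    proof -
      have pos: "(1/2::real)^N * min e 1 > 0" using that by simp
      obtain I where I: "\<forall>n n'. I \<le> n \<longrightarrow> I \<le> n' \<longrightarrow> dd A (s n) (s n') < (1/2)^N * min e 1"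
        using sc[OF pos] by blast
      have "PP A N (\<lambda>k. s i k - s l k) < e" if "i \<ge> I" "l \<ge> I" for i l
        using dd_small[OF sX sX, of i l N "min e 1"] I that by fastforce
      then show ?thesis by blast
    qed
    obtain x where xX: "x \<in> lA A" and conv: "\<And>N. (\<lambda>i. PP A N (\<lambda>k. s i k - x k)) \<longlonglongrightarrow> 0"
      using lA_complete_core[OF sX cau] by blast
    show "\<exists>x. limitin M.mtopology s x sequentially"
    proof (intro exI)
      show "limitin M.mtopology s x sequentially"
        unfolding M.limitin_metric
      proof (intro conjI allI impI xX)
        fix e :: real assume "e > 0"
        then obtain N where N: "(1/2::real)^N < e/2" using half_pow_small[of "e/2"] by auto
        have "eventually (\<lambda>i. PP A N (\<lambda>k. s i k - x k) < e/4) sequentially"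
          using conv[of N] \<open>e > 0\<close> by (intro order_tendstoD(2)) auto
        then show "eventually (\<lambda>i. s i \<in> lA A \<and> dd A (s i) x < e) sequentially"
        proof (rule eventually_mono)
          fix i assume "PP A N (\<lambda>k. s i k - x k) < e/4"
          then show "s i \<in> lA A \<and> dd A (s i) x < e"
            using dd_bound[OF sX xX, of i N] N sX by simp
        qed
      qed
    qed
  qed
qed

lemma uniform_bound:
  fixes f :: "nat \<Rightarrow> seq \<Rightarrow> complex"
  assumes add: "\<And>i x y. x \<in> lA A \<Longrightarrow> y \<in> lA A \<Longrightarrow> f i (\<lambda>k. x k + y k) = f i x + f i y"
   and hom: "\<And>i x c. x \<in> lA A \<Longrightarrow> f i (\<lambda>k. c * x k) = c * f i x"
   and each: "\<And>i. \<exists>C N. \<forall>x\<in>lA A. norm (f i x) \<le> C * PP A N x"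
   and ptw: "\<And>x. x \<in> lA A \<Longrightarrow> \<exists>B. \<forall>i. norm (f i x) \<le> B"
  shows "\<exists>C N. \<forall>i. \<forall>x\<in>lA A. norm (f i x) \<le> C * PP A N x"
proof -
  interpret M: Metric_space "lA A" "dd A" by (rule dd_metric)
  have diff: "f i x - f i y = f i (\<lambda>k. x k - y k)" if "x \<in> lA A" "y \<in> lA A" for i x y
  proof -
    have "f i x = f i (\<lambda>k. y k + (x k - y k))" by simp
    also have "\<dots> = f i y + f i (\<lambda>k. x k - y k)" by (rule add[OF that(2) lA_diff[OF that]])
    finally show ?thesis by simp
  qed
  define G where "G m = {x \<in> lA A. \<forall>i. norm (f i x) \<le> real m}" for m :: nat
  have closed: "closedin M.mtopology (G m)" for m
    unfolding closedin_def M.topspace_mtopology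
  proof
    show "G m \<subseteq> lA A" by (auto simp: G_def)
    show "openin M.mtopology (lA A - G m)"
      unfolding M.openin_mtopology
    proof (intro conjI allI impI)
      show "lA A - G m \<subseteq> lA A" by blast
      fix x assume x: "x \<in> lA A - G m"
      then obtain i where i: "norm (f i x) > real m" and xX: "x \<in> lA A" by (auto simp: G_def not_le)
      obtain C N where CN: "\<forall>x\<in>lA A. norm (f i x) \<le> C * PP A N x" using each by blast
      define C' where "C' = \<bar>C\<bar> + 1"
      define \<delta> where "\<delta> = norm (f i x) - real m"
      have C'pos: "C' > 0" by (simp add: C'_def)
      have \<delta>pos: "\<delta> > 0" using i by (simp add: \<delta>_def)
      define e where "e = min 1 (\<delta> / (2 * C'))"
      have epos: "e > 0" using C'pos \<delta>pos by (simp add: e_def)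
      show "\<exists>r>0. M.mball x r \<subseteq> lA A - G m"
      proof (intro exI conjI subsetI)
        show "(1/2::real)^N * e > 0" using epos by simp
        fix y assume "y \<in> M.mball x ((1/2)^N * e)"
        then have yX: "y \<in> lA A" and dxy: "dd A x y < (1/2)^N * e" by auto
        have P: "PP A N (\<lambda>k. x k - y k) < e"
          by (rule dd_small[OF xX yX dxy]) (simp add: e_def)
        have "norm (f i (\<lambda>k. x k - y k)) \<le> C' * PP A N (\<lambda>k. x k - y k)"
        proof -
          have "C * PP A N (\<lambda>k. x k - y k) \<le> C' * PP A N (\<lambda>k. x k - y k)"
            using PP_nonneg[OF lA_diff[OF xX yX], of N] unfolding C'_def
            by (intro mult_right_mono) auto
          then show ?thesis using CN lA_diff[OF xX yX] by fastforce
        qed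
        also have "\<dots> \<le> C' * e" using P C'pos by simp
        also have "\<dots> \<le> C' * (\<delta> / (2 * C'))" using C'pos by (intro mult_left_mono) (auto simp: e_def)
        also have "\<dots> = \<delta> / 2" using C'pos by simp
        finally have "norm (f i x - f i y) \<le> \<delta> / 2" using diff[OF xX yX] by simp
        then have "norm (f i y) \<ge> norm (f i x) - \<delta> / 2"
          using norm_triangle_ineq2[of "f i x" "f i y"] by linarith
        moreover have "norm (f i x) - \<delta> / 2 > real m" using \<delta>pos unfolding \<delta>_def by (simp add: field_simps)
        ultimately have "norm (f i y) > real m" by linarith
        then have "\<not> (\<forall>i. norm (f i y) \<le> real m)" by (meson not_le)
        then show "y \<in> lA A - G m" using yX unfolding G_def by simp
      qed
    qed
  qed
  have cover: "\<Union>(range G) = lA A"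
  proof
    show "\<Union>(range G) \<subseteq> lA A" by (auto simp: G_def)
    show "lA A \<subseteq> \<Union>(range G)"
    proof
      fix x assume x: "x \<in> lA A"
      obtain B where B: "\<forall>i. norm (f i x) \<le> B" using ptw[OF x] by blast
      have "real (nat \<lceil>B\<rceil>) \<ge> B" by linarith
      then have "x \<in> G (nat \<lceil>B\<rceil>)" using B x unfolding G_def by (auto intro: order_trans)
      then show "x \<in> \<Union>(range G)" by blast
    qed
  qed
  have "\<exists>m. M.mtopology interior_of (G m) \<noteq> {}"
  proof (rule ccontr)
    assume "\<not> ?thesis"
    then have "M.mtopology interior_of \<Union>(range G) = {}"
      using closed lA_mcomplete[of A] by (intro M.metric_Baire_category_alt) auto
    then have "M.mtopology interior_of lA A = {}" using cover by simp
    moreover have "M.mtopology interior_of lA A = lA A"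
      using interior_of_topspace[of M.mtopology] by simp
    ultimately have "lA A = {}" by simp
    then show False using lA_zero[of A] by simp
  qed
  then obtain m x0 where x0: "x0 \<in> M.mtopology interior_of (G m)" by blast
  have "openin M.mtopology (M.mtopology interior_of (G m))" by simp
  then have "\<forall>x. x \<in> M.mtopology interior_of (G m) \<longrightarrow> (\<exists>r>0. M.mball x r \<subseteq> M.mtopology interior_of (G m))"
    unfolding M.openin_mtopology by (rule conjunct2)
  then obtain r where r: "r > 0" "M.mball x0 r \<subseteq> M.mtopology interior_of (G m)"
    using x0 by meson
  have sub: "M.mtopology interior_of (G m) \<subseteq> G m" by (rule interior_of_subset)
  have ballG: "M.mball x0 r \<subseteq> G m" using r(2) sub by (rule order_trans)
  have x0G: "x0 \<in> G m" using x0 sub by (rule set_mp[rotated])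
  then have x0X: "x0 \<in> lA A" by (simp add: G_def)
  obtain N where N: "(1/2::real)^N < r/2" using half_pow_small[of "r/2"] r by auto
  define \<epsilon> where "\<epsilon> = r/4"
  have \<epsilon>pos: "\<epsilon> > 0" using r by (simp add: \<epsilon>_def)
  have Z: "norm (f i z) \<le> 2 * real m" if z: "z \<in> lA A" "PP A N z < \<epsilon>" for i z
  proof -
    define y where "y = (\<lambda>k. x0 k + z k)"
    have yX: "y \<in> lA A" unfolding y_def by (rule lA_add[OF x0X z(1)])
    have "(\<lambda>k. x0 k - y k) = (\<lambda>k. - z k)" by (simp add: y_def)
    then have "PP A N (\<lambda>k. x0 k - y k) = PP A N z" using PP_neg[OF z(1)] by simp
    then have "dd A x0 y < r"
      using dd_bound[OF x0X yX, of N] N z(2) unfolding \<epsilon>_def by linarith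
    then have "y \<in> G m" using ballG x0X yX by auto
    then have "norm (f i y) \<le> real m" by (simp add: G_def)
    moreover have "norm (f i x0) \<le> real m" using x0G by (simp add: G_def)
    moreover have "f i y - f i x0 = f i z"
      using diff[OF yX x0X, of i] by (simp add: y_def)
    ultimately show ?thesis using norm_triangle_ineq4[of "f i y" "f i x0"] by simp
  qed
  have "norm (f i z) \<le> (4 * real m / \<epsilon>) * PP A N z" if z: "z \<in> lA A" for i z
  proof (cases "PP A N z = 0")
    case True
    have "norm (f i z) = 0"
    proof (rule ccontr)
      assume nz: "norm (f i z) \<noteq> 0"
      define t where "t = (2 * real m + 1) / norm (f i z)"
      have tpos: "t > 0" using nz unfolding t_def by simp
      have "PP A N (\<lambda>k. complex_of_real t * z k) = 0"
        using PP_scale[OF z, of N "complex_of_real t"] True by simp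
      then have "norm (f i (\<lambda>k. complex_of_real t * z k)) \<le> 2 * real m"
        using \<epsilon>pos by (intro Z lA_scale z) auto
      moreover have "norm (f i (\<lambda>k. complex_of_real t * z k)) = t * norm (f i z)"
        using hom[OF z, of i "complex_of_real t"] tpos by (simp add: norm_mult)
      moreover have "t * norm (f i z) = 2 * real m + 1" using nz by (simp add: t_def)
      ultimately show False by simp
    qed
    then show ?thesis using True by simp
  next
    case False
    define P where "P = PP A N z"
    have Ppos: "P > 0" using False PP_nonneg[OF z, of N] by (simp add: P_def)
    define t where "t = \<epsilon> / (2 * P)"
    have tpos: "t > 0" using Ppos \<epsilon>pos by (simp add: t_def)
    have "PP A N (\<lambda>k. complex_of_real t * z k) = t * P"
      using PP_scale[OF z, of N "complex_of_real t"] tpos by (simp add: P_def)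
    also have "\<dots> = \<epsilon> / 2" using Ppos by (simp add: t_def)
    finally have "PP A N (\<lambda>k. complex_of_real t * z k) < \<epsilon>" using \<epsilon>pos by simp
    then have "norm (f i (\<lambda>k. complex_of_real t * z k)) \<le> 2 * real m"
      by (intro Z lA_scale z)
    then have "t * norm (f i z) \<le> 2 * real m"
      using hom[OF z, of i "complex_of_real t"] tpos by (simp add: norm_mult)
    then have "norm (f i z) \<le> 2 * real m / t" using tpos by (simp add: field_simps)
    also have "2 * real m / t = (4 * real m / \<epsilon>) * P"
      using Ppos \<epsilon>pos by (simp add: t_def field_simps)
    finally show ?thesis by (simp add: P_def)
  qed
  then show ?thesis by blast
qed


lemma rs_delta: "rs D n (delta j) = D n j"
proof -
  have "(\<lambda>k. D n k * delta j k) = (\<lambda>k. if k = j then D n k else 0)"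
    by (auto simp: delta_def)
  then show ?thesis unfolding rs_def using sums_single[of j "D n"] by (simp add: sums_iff)
qed

lemma partial_bound:
  assumes x: "x \<in> lA A"
  shows "norm (\<Sum>k<m. c k * x k) \<le> (\<Sum>k<m. norm (c k)) * PP A m x"
proof -
  have "norm (\<Sum>k<m. c k * x k) \<le> (\<Sum>k<m. norm (c k) * norm (x k))"
    by (rule order_trans[OF norm_sum]) (simp add: norm_mult)
  also have "\<dots> \<le> (\<Sum>k<m. norm (c k) * PP A m x)"
    by (intro sum_mono mult_left_mono PP_coord[OF x]) auto
  also have "\<dots> = (\<Sum>k<m. norm (c k)) * PP A m x" by (simp add: sum_distrib_right)
  finally show ?thesis .
qed

lemma row_functional_bound:
  assumes eq: "lA D = lA A"
  shows "\<exists>C N. \<forall>x\<in>lA A. norm (rs D n x) \<le> C * PP A N x"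
proof -
  define f where "f m x = (\<Sum>k<m. D n k * x k)" for m x
  have "\<exists>C N. \<forall>m. \<forall>x\<in>lA A. norm (f m x) \<le> C * PP A N x"
  proof (rule uniform_bound)
    show "f m (\<lambda>k. x k + y k) = f m x + f m y" for m x y
      by (simp add: f_def distrib_left sum.distrib)
    show "f m (\<lambda>k. c * x k) = c * f m x" for m x c
      by (simp add: f_def sum_distrib_left mult.left_commute)
    show "\<exists>C N. \<forall>x\<in>lA A. norm (f m x) \<le> C * PP A N x" for m
      unfolding f_def using partial_bound by blast
    fix x assume "x \<in> lA A"
    then have "x \<in> lA D" using eq by simp
    then have "convergent (\<lambda>m. \<Sum>k<m. D n k * x k)"
      using lA_rows summable_iff_convergent by blast
    then have "Bseq (\<lambda>m. \<Sum>k<m. D n k * x k)" by (rule convergent_imp_Bseq)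
    then show "\<exists>B. \<forall>m. norm (f m x) \<le> B" unfolding f_def Bseq_def by (auto intro: less_imp_le)
  qed
  then obtain C N where CN: "\<forall>m. \<forall>x\<in>lA A. norm (f m x) \<le> C * PP A N x" by blast
  have "norm (rs D n x) \<le> C * PP A N x" if x: "x \<in> lA A" for x
  proof -
    have "x \<in> lA D" using eq x by simp
    then have "(\<lambda>m. f m x) \<longlonglongrightarrow> rs D n x"
      unfolding f_def rs_def by (intro summable_LIMSEQ lA_rows)
    moreover have "\<forall>m\<ge>0. norm (f m x) \<le> C * PP A N x" using CN x by blast
    ultimately show ?thesis by (intro Lim_bounded[OF tendsto_norm]) 
  qed
  then show ?thesis by blast
qed

lemma forward_dual:
  assumes eq: "lA D = lA A" and col: "\<And>k. (\<lambda>n. D n k) sums 1"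
  shows "\<exists>F\<in>lA_dual A. \<forall>j. F (delta j) = 1"
proof -
  have XD: "x \<in> lA D \<longleftrightarrow> x \<in> lA A" for x using eq by simp
  obtain Cf Nf where CNf: "\<And>n. \<forall>x\<in>lA A. norm (rs D n x) \<le> Cf n * PP A (Nf n) x"
    using row_functional_bound[OF eq] by metis
  define F where "F x = (\<Sum>n. rs D n x)" for x
  have abs: "summable (\<lambda>n. norm (rs D n x))" if "x \<in> lA A" for x
    using lA_T[of x D] that XD by simp
  have sm: "summable (\<lambda>n. rs D n x)" if "x \<in> lA A" for x
    by (rule summable_norm_cancel[OF abs[OF that]])
  have Fadd: "F (\<lambda>k. x k + y k) = F x + F y" if "x \<in> lA A" "y \<in> lA A" for x y
    unfolding F_def using that XD
    by (simp add: rs_add suminf_add[OF sm sm, symmetric])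
  have Fhom: "F (\<lambda>k. c * x k) = c * F x" if "x \<in> lA A" for x c
    unfolding F_def using that XD by (simp add: rs_scale suminf_mult[OF sm])
  define g where "g M x = (\<Sum>n<M. rs D n x)" for M x
  have "\<exists>C N. \<forall>M. \<forall>x\<in>lA A. norm (g M x) \<le> C * PP A N x"
  proof (rule uniform_bound)
    show "g M (\<lambda>k. x k + y k) = g M x + g M y" if "x \<in> lA A" "y \<in> lA A" for M x y
      unfolding g_def using that XD by (simp add: rs_add sum.distrib)
    show "g M (\<lambda>k. c * x k) = c * g M x" if "x \<in> lA A" for M x c
      unfolding g_def using that XD by (simp add: rs_scale sum_distrib_left)
    show "\<exists>C N. \<forall>x\<in>lA A. norm (g M x) \<le> C * PP A N x" for M
    proof (intro exI ballI)
      fix x assume x: "x \<in> lA A"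
      have "norm (g M x) \<le> (\<Sum>n<M. norm (rs D n x))"
        unfolding g_def by (rule norm_sum)
      also have "\<dots> \<le> (\<Sum>n<M. \<bar>Cf n\<bar> * PP A (\<Sum>n<M. Nf n) x)"
      proof (rule sum_mono)
        fix n assume n: "n \<in> {..<M}"
        have "Nf n \<le> (\<Sum>n<M. Nf n)" using n by (intro member_le_sum) auto
        then have "PP A (Nf n) x \<le> PP A (\<Sum>n<M. Nf n) x" by (rule PP_mono[OF x])
        moreover have "Cf n * PP A (Nf n) x \<le> \<bar>Cf n\<bar> * PP A (Nf n) x"
          using PP_nonneg[OF x] by (intro mult_right_mono) auto
        ultimately show "norm (rs D n x) \<le> \<bar>Cf n\<bar> * PP A (\<Sum>n<M. Nf n) x"
          using CNf[of n] x by (meson abs_ge_zero mult_left_mono order_trans)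
      qed
      also have "\<dots> = (\<Sum>n<M. \<bar>Cf n\<bar>) * PP A (\<Sum>n<M. Nf n) x"
        by (simp add: sum_distrib_right)
      finally show "norm (g M x) \<le> (\<Sum>n<M. \<bar>Cf n\<bar>) * PP A (\<Sum>n<M. Nf n) x" .
    qed
    fix x assume x: "x \<in> lA A"
    have "norm (g M x) \<le> (\<Sum>n. norm (rs D n x))" for M
      unfolding g_def
      by (rule order_trans[OF norm_sum sum_le_suminf[OF abs[OF x]]]) auto
    then show "\<exists>B. \<forall>M. norm (g M x) \<le> B" by blast
  qed
  then obtain C N where CN: "\<forall>M. \<forall>x\<in>lA A. norm (g M x) \<le> C * PP A N x" by blast
  have Fb: "norm (F x) \<le> C * PP A N x" if x: "x \<in> lA A" for x
  proof -
    have "(\<lambda>M. g M x) \<longlonglongrightarrow> F x"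
      unfolding g_def F_def by (intro summable_LIMSEQ sm x)
    moreover have "\<forall>M\<ge>0. norm (g M x) \<le> C * PP A N x" using CN x by blast
    ultimately show ?thesis by (intro Lim_bounded[OF tendsto_norm])
  qed
  have "F \<in> lA_dual A" by (rule bounded_in_dual[OF Fadd Fhom Fb])
  moreover have "F (delta j) = 1" for j
    unfolding F_def rs_delta using col[of j] by (simp add: sums_iff)
  ultimately show ?thesis by blast
qed

lemma forward:
  assumes "l_replaceable A" and DF: "DF_lA p q A = lA A"
  shows "lA A \<subseteq> sigma_pq_s p q"
proof
  obtain D where eq: "lA D = lA A" and col: "\<And>k. (\<lambda>n. D n k) sums 1"
    using assms(1) unfolding l_replaceable_def by blast
  obtain F where F: "F \<in> lA_dual A" "\<And>j. F (delta j) = 1"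
    using forward_dual[OF eq col] by blast
  fix x assume "x \<in> lA A"
  then have "x \<in> DF_plus_lA p q A" using DF unfolding DF_lA_def by blast
  then have "convergent (mean_pq p q (\<lambda>j. x j * F (delta j)))"
    using F(1) unfolding DF_plus_lA_def by blast
  then show "x \<in> sigma_pq_s p q" using F(2) by (simp add: sigma_pq_s_def)
qed


lemma PP_sum: assumes "x \<in> lA A" shows "(\<Sum>j<N. norm (x j)) \<le> PP A N x"
proof -
  have "0 \<le> (\<Sum>n<N. RR A n x)" by (intro sum_nonneg RR_nonneg assms)
  then show ?thesis unfolding PP_def using TT_nonneg[OF assms] by linarith
qed

lemma phi_support: assumes "x \<in> phi" shows "\<exists>M. \<forall>k\<ge>M. x k = 0"
proof -
  obtain F where F: "finite F" "\<And>k. k \<notin> F \<Longrightarrow> x k = 0"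
    using assms unfolding phi_def by blast
  show ?thesis
  proof (intro exI allI impI)
    fix k assume "Suc (Max (insert 0 F)) \<le> k"
    then have "k \<notin> F" using F(1) Max_ge[of "insert 0 F"] by (metis finite_insert insertCI not_less_eq_eq)
    then show "x k = 0" by (rule F(2))
  qed
qed

lemma phi_suminf: fixes x :: seq assumes "\<forall>k\<ge>M. x k = 0" shows "suminf x = (\<Sum>j<M. x j)"
  by (rule suminf_finite) (use assms in auto)

lemma mean_linear:
  shows "mean_pq p q (\<lambda>k. x k + y k) n = mean_pq p q x n + mean_pq p q y n"
    and "mean_pq p q (\<lambda>k. c * x k) n = c * mean_pq p q x n"
  by (simp_all add: mean_pq_def sum.distrib distrib_left sum_distrib_left mult.left_commute)

lemma mean_bound:
  assumes pq: "p n < q n"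
  shows "norm (mean_pq p q x n) \<le> (\<Sum>j<q n. norm (x j))"
proof -
  have cardK: "card {p n + 1..q n} = q n - p n" by simp
  have "norm (\<Sum>k\<in>{p n + 1..q n}. \<Sum>j<k. x j) \<le> (\<Sum>k\<in>{p n + 1..q n}. \<Sum>j<q n. norm (x j))"
  proof (rule order_trans[OF norm_sum sum_mono])
    fix k assume "k \<in> {p n + 1..q n}"
    then have "k \<le> q n" by simp
    then show "norm (\<Sum>j<k. x j) \<le> (\<Sum>j<q n. norm (x j))"
      by (intro order_trans[OF norm_sum sum_mono2]) auto
  qed
  also have "\<dots> = real (q n - p n) * (\<Sum>j<q n. norm (x j))" using cardK by simp
  finally have *: "norm (\<Sum>k\<in>{p n + 1..q n}. \<Sum>j<k. x j) \<le> real (q n - p n) * (\<Sum>j<q n. norm (x j))" .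
  have pos: "real (q n - p n) > 0" using pq by simp
  have "norm (mean_pq p q x n) = norm (\<Sum>k\<in>{p n + 1..q n}. \<Sum>j<k. x j) / real (q n - p n)"
    unfolding mean_pq_def by (simp only: norm_mult norm_divide norm_one norm_of_nat) simp
  also have "\<dots> \<le> (\<Sum>j<q n. norm (x j))"
    using * pos by (simp add: divide_le_eq mult.commute)
  finally show ?thesis .
qed

lemma mean_error:
  assumes pq: "p n < q n" and M: "\<forall>k\<ge>M. x k = 0" and qM: "q n > M"
  shows "norm (mean_pq p q x n - (\<Sum>j<M. x j)) \<le> real M * (2 * (\<Sum>j<M. norm (x j))) / real (q n - M)"
proof -
  define S where "S = (\<Sum>j<M. x j)"
  define B where "B = 2 * (\<Sum>j<M. norm (x j))"
  define K where "K = {p n + 1..q n}"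
  define L where "L = q n - p n"
  have Lpos: "real L > 0" using pq by (simp add: L_def)
  have cardK: "card K = L" by (simp add: K_def L_def)
  have Bnn: "B \<ge> 0" by (simp add: B_def sum_nonneg)
  have Pk: "(\<Sum>j<k. x j) = S" if "k \<ge> M" for k
  proof -
    have "(\<Sum>j<k. x j) = (\<Sum>j<M. x j) + (\<Sum>j\<in>{M..<k}. x j)"
      using that by (metis atLeast0LessThan sum.atLeastLessThan_concat zero_le)
    also have "(\<Sum>j\<in>{M..<k}. x j) = 0" using M by simp
    finally show ?thesis by (simp add: S_def)
  qed
  have Pb: "norm ((\<Sum>j<k. x j) - S) \<le> B" if "k < M" for k
  proof -
    have "norm (\<Sum>j<k. x j) \<le> (\<Sum>j<M. norm (x j))"
      using that by (intro order_trans[OF norm_sum sum_mono2]) auto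
    moreover have "norm S \<le> (\<Sum>j<M. norm (x j))" unfolding S_def by (rule norm_sum)
    ultimately show ?thesis unfolding B_def using norm_triangle_ineq4[of "\<Sum>j<k. x j" S] by linarith
  qed
  have "mean_pq p q x n - S = (1 / of_nat L) * (\<Sum>k\<in>K. ((\<Sum>j<k. x j) - S))"
  proof -
    have "(\<Sum>k\<in>K. ((\<Sum>j<k. x j) - S)) = (\<Sum>k\<in>K. \<Sum>j<k. x j) - of_nat L * S"
      by (simp add: sum_subtractf cardK)
    then show ?thesis using Lpos unfolding mean_pq_def K_def[symmetric] L_def[symmetric]
      by (simp add: field_simps)
  qed
  also have "(\<Sum>k\<in>K. ((\<Sum>j<k. x j) - S)) = (\<Sum>k\<in>K \<inter> {..<M}. ((\<Sum>j<k. x j) - S))"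
  proof (rule sum.mono_neutral_right)
    show "finite K" by (simp add: K_def)
    show "K \<inter> {..<M} \<subseteq> K" by blast
    show "\<forall>i\<in>K - K \<inter> {..<M}. (\<Sum>j<i. x j) - S = 0"
    proof
      fix i assume "i \<in> K - K \<inter> {..<M}"
      then have "i \<ge> M" by auto
      then show "(\<Sum>j<i. x j) - S = 0" using Pk by simp
    qed
  qed
  finally have eq: "mean_pq p q x n - S = (1 / of_nat L) * (\<Sum>k\<in>K \<inter> {..<M}. ((\<Sum>j<k. x j) - S))" .
  have nb: "norm (\<Sum>k\<in>K \<inter> {..<M}. ((\<Sum>j<k. x j) - S)) \<le> real (card (K \<inter> {..<M})) * B"
    using Pb by (intro order_trans[OF norm_sum]) (auto intro: order_trans[OF sum_mono[of _ _ "\<lambda>_. B"]])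
  show ?thesis
  proof (cases "K \<inter> {..<M} = {}")
    case True
    then show ?thesis using eq qM Bnn by (simp add: S_def B_def[symmetric])
  next
    case False
    then have "p n < M" unfolding K_def by auto
    then have LqM: "real L \<ge> real (q n - M)" unfolding L_def using qM by simp
    have cM: "real (card (K \<inter> {..<M})) \<le> real M"
      using card_mono[of "{..<M}" "K \<inter> {..<M}"] by simp
    have "norm (mean_pq p q x n - S) = norm (\<Sum>k\<in>K \<inter> {..<M}. ((\<Sum>j<k. x j) - S)) / real L"
      using Lpos by (simp add: eq norm_mult norm_divide)
    also have "\<dots> \<le> real M * B / real L"
      using nb cM Bnn Lpos by (intro divide_right_mono order_trans[OF nb] mult_right_mono) auto
    also have "\<dots> \<le> real M * B / real (q n - M)"
      using LqM qM Bnn by (intro divide_left_mono mult_nonneg_nonneg) auto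
    finally show ?thesis by (simp add: S_def B_def)
  qed
qed

lemma phi_bound:
  assumes pq: "\<And>n. p n < q n" and qinf: "filterlim q at_top sequentially"
    and sub: "lA A \<subseteq> sigma_pq_s p q" and phi: "phi \<subseteq> lA A"
  shows "\<exists>C N. \<forall>x\<in>phi. norm (suminf x) \<le> C * PP A N x"
proof -
  have "\<exists>C N. \<forall>n. \<forall>x\<in>lA A. norm (mean_pq p q x n) \<le> C * PP A N x"
  proof (rule uniform_bound)
    show "mean_pq p q (\<lambda>k. x k + y k) n = mean_pq p q x n + mean_pq p q y n" for n x y
      by (rule mean_linear(1))
    show "mean_pq p q (\<lambda>k. c * x k) n = c * mean_pq p q x n" for n x c
      by (rule mean_linear(2))
    show "\<exists>C N. \<forall>x\<in>lA A. norm (mean_pq p q x n) \<le> C * PP A N x" for n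
      using mean_bound[where p=p and q=q and n=n, OF pq] PP_sum by (metis mult_1 order_trans)
    fix x assume "x \<in> lA A"
    then have "convergent (mean_pq p q x)" using sub by (auto simp: sigma_pq_s_def)
    then have "Bseq (mean_pq p q x)" by (rule convergent_imp_Bseq)
    then show "\<exists>B. \<forall>n. norm (mean_pq p q x n) \<le> B" unfolding Bseq_def by (auto intro: less_imp_le)
  qed
  then obtain C N where CN: "\<forall>n. \<forall>x\<in>lA A. norm (mean_pq p q x n) \<le> C * PP A N x" by blast
  have "norm (suminf x) \<le> C * PP A N x" if x: "x \<in> phi" for x
  proof -
    obtain M where M: "\<forall>k\<ge>M. x k = 0" using phi_support[OF x] by blast
    have xX: "x \<in> lA A" using x phi by blast
    define B where "B = 2 * (\<Sum>j<M. norm (x j))"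
    have Bnn: "B \<ge> 0" by (simp add: B_def sum_nonneg)
    have "norm (suminf x) \<le> C * PP A N x + \<epsilon>" if eps: "\<epsilon> > 0" for \<epsilon>
    proof -
      have "eventually (\<lambda>n. q n \<ge> M + 1 + nat \<lceil>real M * B / \<epsilon>\<rceil>) sequentially"
        using qinf by (simp add: filterlim_at_top)
      then obtain n where n: "q n \<ge> M + 1 + nat \<lceil>real M * B / \<epsilon>\<rceil>"
        by (auto simp: eventually_sequentially)
      have qM: "q n > M" using n by simp
      have err: "norm (mean_pq p q x n - suminf x) \<le> real M * B / real (q n - M)"
        using mean_error[where p=p and q=q and n=n, OF pq M qM] by (simp add: phi_suminf[OF M] B_def)
      have "real (q n - M) \<ge> 1 + real M * B / \<epsilon>"
        using n qM by (simp add: of_nat_diff) linarith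
      then have "real M * B / real (q n - M) \<le> real M * B / (1 + real M * B / \<epsilon>)"
      proof -
        have p1: "1 + real M * B / \<epsilon> > 0" using Bnn eps by (intro add_pos_nonneg) auto
        then have "real (q n - M) > 0" using \<open>real (q n - M) \<ge> 1 + real M * B / \<epsilon>\<close> by linarith
        then show ?thesis using Bnn p1 \<open>real (q n - M) \<ge> 1 + real M * B / \<epsilon>\<close>
          by (intro divide_left_mono mult_pos_pos) auto
      qed
      also have "\<dots> \<le> \<epsilon>"
      proof -
        have "real M * B \<le> \<epsilon> * (1 + real M * B / \<epsilon>)" using eps Bnn by (simp add: field_simps)
        then show ?thesis using eps Bnn by (simp add: divide_le_eq add_pos_nonneg)
      qed
      finally have "norm (mean_pq p q x n - suminf x) \<le> \<epsilon>" using order_trans[OF err] by blast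
      moreover have "norm (mean_pq p q x n) \<le> C * PP A N x" using CN xX by blast
      moreover have "norm (suminf x) \<le> norm (mean_pq p q x n) + norm (mean_pq p q x n - suminf x)"
        using norm_triangle_ineq4[of "mean_pq p q x n" "mean_pq p q x n - suminf x"] by simp
      ultimately show ?thesis by linarith
    qed
    then show ?thesis by (rule field_le_epsilon)
  qed
  then show ?thesis by blast
qed


definition fsupp :: "(nat \<Rightarrow> real) \<Rightarrow> bool" where
  "fsupp t \<longleftrightarrow> (\<exists>K. \<forall>i\<ge>K. t i = 0)"

lemma fsupp_add: "fsupp t \<Longrightarrow> fsupp u \<Longrightarrow> fsupp (\<lambda>i. t i + u i)"
  unfolding fsupp_def by (metis add.right_neutral le_trans nat_le_linear)

lemma fsupp_scale: "fsupp t \<Longrightarrow> fsupp (\<lambda>i. r * t i)"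
  unfolding fsupp_def by auto

lemma fsupp_below: "\<forall>i\<ge>k. t i = 0 \<Longrightarrow> fsupp t"
  unfolding fsupp_def by blast

locale hb_setting =
  fixes S :: "seq set" and lf :: "seq \<Rightarrow> real" and Q :: "seq \<Rightarrow> (nat \<Rightarrow> real) \<Rightarrow> real"
  assumes S0: "(\<lambda>k. 0) \<in> S"
    and Sadd: "\<And>x y. x \<in> S \<Longrightarrow> y \<in> S \<Longrightarrow> (\<lambda>k. x k + y k) \<in> S"
    and Ssc: "\<And>x r. x \<in> S \<Longrightarrow> (\<lambda>k. complex_of_real r * x k) \<in> S"
    and ladd: "\<And>x y. x \<in> S \<Longrightarrow> y \<in> S \<Longrightarrow> lf (\<lambda>k. x k + y k) = lf x + lf y"
    and lsc: "\<And>x r. x \<in> S \<Longrightarrow> lf (\<lambda>k. complex_of_real r * x k) = r * lf x"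
    and Qsub: "\<And>x y t u. x \<in> S \<Longrightarrow> y \<in> S \<Longrightarrow> fsupp t \<Longrightarrow> fsupp u \<Longrightarrow>
        Q (\<lambda>k. x k + y k) (\<lambda>i. t i + u i) \<le> Q x t + Q y u"
    and Qsc: "\<And>x t r. x \<in> S \<Longrightarrow> fsupp t \<Longrightarrow>
        Q (\<lambda>k. complex_of_real r * x k) (\<lambda>i. r * t i) = \<bar>r\<bar> * Q x t"
    and lQ: "\<And>x. x \<in> S \<Longrightarrow> lf x \<le> Q x (\<lambda>i. 0)"
begin

definition Good :: "nat \<Rightarrow> (nat \<Rightarrow> real) \<Rightarrow> bool" where
  "Good k c \<longleftrightarrow> (\<forall>x t. x \<in> S \<longrightarrow> (\<forall>i\<ge>k. t i = 0) \<longrightarrow> lf x + (\<Sum>i<k. t i * c i) \<le> Q x t)"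

lemma Good0: "Good 0 c"
proof -
  have "t = (\<lambda>i. 0)" if "\<forall>i\<ge>0. t i = 0" for t :: "nat \<Rightarrow> real" using that by auto
  then show ?thesis unfolding Good_def using lQ by auto
qed

lemma Good_step:
  assumes G: "Good k c"
  shows "\<exists>v. Good (Suc k) (c(k := v))"
proof -
  define L where "L x t = lf x + (\<Sum>i<k. t i * c i)" for x t
  define ek where "ek = (\<lambda>i. if i = k then 1 else 0 :: real)"
  define W where "W = {(x, t :: nat \<Rightarrow> real). x \<in> S \<and> (\<forall>i\<ge>k. t i = 0)}"
  have fek: "fsupp ek" unfolding ek_def fsupp_def by (intro exI[of _ "Suc k"]) auto
  have GL: "L x t \<le> Q x t" if "(x, t) \<in> W" for x t
    using G that unfolding Good_def L_def W_def by auto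
  have Ladd: "L (\<lambda>k. x k + y k) (\<lambda>i. t i + u i) = L x t + L y u" if "x \<in> S" "y \<in> S" for x y and t u :: "nat \<Rightarrow> real"
    unfolding L_def using ladd[OF that] by (simp add: distrib_right sum.distrib)
  have Lsc: "L (\<lambda>k. complex_of_real r * x k) (\<lambda>i. r * t i) = r * L x t" if "x \<in> S" for x and t :: "nat \<Rightarrow> real" and r
    unfolding L_def using lsc[OF that] by (simp add: distrib_left sum_distrib_left mult.assoc)
  have key: "L x t - Q x (\<lambda>i. t i - ek i) \<le> Q y (\<lambda>i. u i + ek i) - L y u"
    if xt: "(x, t) \<in> W" and yu: "(y, u) \<in> W" for x t y u
  proof -
    have xS: "x \<in> S" and yS: "y \<in> S" using xt yu by (auto simp: W_def)
    have ft: "fsupp t" and fu: "fsupp u" using xt yu by (auto simp: W_def intro: fsupp_below)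
    have "L x t + L y u = L (\<lambda>k. x k + y k) (\<lambda>i. t i + u i)" by (rule Ladd[OF xS yS, symmetric])
    also have "\<dots> \<le> Q (\<lambda>k. x k + y k) (\<lambda>i. t i + u i)"
      using xt yu Sadd[OF xS yS] by (intro GL) (auto simp: W_def)
    also have "(\<lambda>i. t i + u i) = (\<lambda>i. (t i - ek i) + (u i + ek i))" by auto
    also have "Q (\<lambda>k. x k + y k) \<dots> \<le> Q x (\<lambda>i. t i - ek i) + Q y (\<lambda>i. u i + ek i)"
      using fsupp_add[OF ft fsupp_scale[OF fek, of "-1"]] fsupp_add[OF fu fek]
      by (intro Qsub xS yS) auto
    finally show ?thesis by linarith
  qed
  define V where "V = {L x t - Q x (\<lambda>i. t i - ek i) | x t. (x, t) \<in> W}"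
  define v where "v = Sup V"
  have W0: "((\<lambda>k. 0), (\<lambda>i. 0)) \<in> W" using S0 by (simp add: W_def)
  have Vne: "V \<noteq> {}" using W0 unfolding V_def by blast
  have Vbdd: "bdd_above V"
    unfolding V_def bdd_above_def using key[OF _ W0] by blast
  have va: "L x t - Q x (\<lambda>i. t i - ek i) \<le> v" if "(x, t) \<in> W" for x t
    unfolding v_def using that by (intro cSup_upper Vbdd) (auto simp: V_def)
  have vb: "v \<le> Q y (\<lambda>i. u i + ek i) - L y u" if "(y, u) \<in> W" for y u
    unfolding v_def using key[OF _ that] by (intro cSup_least Vne) (auto simp: V_def)
  have "Good (Suc k) (c(k := v))"
    unfolding Good_def
  proof (intro allI impI)
    fix x and t :: "nat \<Rightarrow> real" assume xS: "x \<in> S" and t: "\<forall>i\<ge>Suc k. t i = 0"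
    define \<tau> where "\<tau> = t k"
    define t0 where "t0 = t(k := 0)"
    have t0W: "(x, t0) \<in> W" using xS t by (auto simp: W_def t0_def)
    have ft0: "fsupp t0" using t0W by (auto simp: W_def intro: fsupp_below)
    have tdec: "t = (\<lambda>i. t0 i + \<tau> * ek i)" by (auto simp: t0_def \<tau>_def ek_def)
    have sumeq: "(\<Sum>i<Suc k. t i * (c(k := v)) i) = (\<Sum>i<k. t0 i * c i) + \<tau> * v"
      by (simp add: t0_def \<tau>_def)
    have goal: "L x t0 + \<tau> * v \<le> Q x t"
    proof (cases "\<tau> = 0")
      case True
      then have "t = t0" using tdec by simp
      then show ?thesis using GL[OF t0W] True by simp
    next
      case False
      show ?thesis
      proof (cases "\<tau> > 0")
        case True
        define x' where "x' = (\<lambda>k. complex_of_real (1/\<tau>) * x k)"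
        define u where "u = (\<lambda>i. (1/\<tau>) * t0 i)"
        have x'S: "x' \<in> S" unfolding x'_def by (rule Ssc[OF xS])
        have uW: "(x', u) \<in> W" using x'S t0W by (auto simp: W_def u_def)
        have fu: "fsupp (\<lambda>i. u i + ek i)" unfolding u_def by (intro fsupp_add fsupp_scale ft0 fek)
        have "v \<le> Q x' (\<lambda>i. u i + ek i) - L x' u" by (rule vb[OF uW])
        then have "\<tau> * v \<le> \<tau> * Q x' (\<lambda>i. u i + ek i) - \<tau> * L x' u"
          using True by (simp add: right_diff_distrib[symmetric])
        also have "\<tau> * Q x' (\<lambda>i. u i + ek i) = Q (\<lambda>k. complex_of_real \<tau> * x' k) (\<lambda>i. \<tau> * (u i + ek i))"
          using Qsc[OF x'S fu, of \<tau>] True by simp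
        also have "(\<lambda>k. complex_of_real \<tau> * x' k) = x"
          using True by (auto simp: x'_def mult.assoc[symmetric] of_real_mult[symmetric])
        also have "(\<lambda>i. \<tau> * (u i + ek i)) = t"
          using True by (subst tdec) (auto simp: u_def distrib_left)
        also have "\<tau> * L x' u = L (\<lambda>k. complex_of_real \<tau> * x' k) (\<lambda>i. \<tau> * u i)"
          by (rule Lsc[OF x'S, symmetric])
        also have "(\<lambda>k. complex_of_real \<tau> * x' k) = x"
          using True by (auto simp: x'_def mult.assoc[symmetric] of_real_mult[symmetric])
        also have "(\<lambda>i. \<tau> * u i) = t0" using True by (auto simp: u_def)
        finally show ?thesis by simp
      next
        case False
        with \<open>\<tau> \<noteq> 0\<close> have neg: "\<tau> < 0" by simp
        define \<sigma> where "\<sigma> = - \<tau>"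
        have spos: "\<sigma> > 0" using neg by (simp add: \<sigma>_def)
        define x' where "x' = (\<lambda>k. complex_of_real (1/\<sigma>) * x k)"
        define u where "u = (\<lambda>i. (1/\<sigma>) * t0 i)"
        have x'S: "x' \<in> S" unfolding x'_def by (rule Ssc[OF xS])
        have uW: "(x', u) \<in> W" using x'S t0W by (auto simp: W_def u_def)
        have fu: "fsupp (\<lambda>i. u i - ek i)"
          unfolding u_def using fsupp_add[OF fsupp_scale[OF ft0, of "1/\<sigma>"] fsupp_scale[OF fek, of "-1"]]
          by simp
        have "L x' u - Q x' (\<lambda>i. u i - ek i) \<le> v" by (rule va[OF uW])
        then have "\<sigma> * L x' u - \<sigma> * Q x' (\<lambda>i. u i - ek i) \<le> \<sigma> * v"
          using spos by (simp add: right_diff_distrib[symmetric])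
        also have "\<sigma> * Q x' (\<lambda>i. u i - ek i) = Q (\<lambda>k. complex_of_real \<sigma> * x' k) (\<lambda>i. \<sigma> * (u i - ek i))"
          using Qsc[OF x'S fu, of \<sigma>] spos by simp
        also have "(\<lambda>k. complex_of_real \<sigma> * x' k) = x"
          using spos by (auto simp: x'_def mult.assoc[symmetric] of_real_mult[symmetric])
        also have "(\<lambda>i. \<sigma> * (u i - ek i)) = t"
          using spos by (subst tdec) (auto simp: u_def right_diff_distrib \<sigma>_def)
        also have "\<sigma> * L x' u = L (\<lambda>k. complex_of_real \<sigma> * x' k) (\<lambda>i. \<sigma> * u i)"
          by (rule Lsc[OF x'S, symmetric])
        also have "(\<lambda>k. complex_of_real \<sigma> * x' k) = x"
          using spos by (auto simp: x'_def mult.assoc[symmetric] of_real_mult[symmetric])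
        also have "(\<lambda>i. \<sigma> * u i) = t0" using spos by (auto simp: u_def)
        finally show ?thesis by (simp add: \<sigma>_def)
      qed
    qed
    then show "lf x + (\<Sum>i<Suc k. t i * (c(k := v)) i) \<le> Q x t"
      using sumeq unfolding L_def by simp
  qed
  then show ?thesis by blast
qed

lemma HB_nat:
  "\<exists>c. \<forall>k x t. x \<in> S \<longrightarrow> (\<forall>i\<ge>k. t i = 0) \<longrightarrow> lf x + (\<Sum>i<k. t i * c i) \<le> Q x t"
proof -
  obtain F where F: "\<And>n. Good n (F n) \<and> (\<forall>i<n. F (Suc n) i = F n i)"
    using dependent_nat_choice[of Good "\<lambda>n c c'. \<forall>i<n. c' i = c i"] Good0 Good_step
    by (metis fun_upd_other nat_neq_iff)
  define c where "c i = F (Suc i) i" for i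
  have agree: "F n i = c i" if "i < n" for n i
    using that
  proof (induction n)
    case 0 then show ?case by simp
  next
    case (Suc n)
    show ?case
    proof (cases "i = n")
      case True then show ?thesis by (simp add: c_def)
    next
      case False
      then have "i < n" using Suc.prems by simp
      then show ?thesis using F[of n] Suc.IH by simp
    qed
  qed
  have "Good k c" for k
  proof -
    have "(\<Sum>i<k. t i * c i) = (\<Sum>i<k. t i * F k i)" for t
      by (intro sum.cong) (auto simp: agree)
    then show ?thesis using F[of k] unfolding Good_def by simp
  qed
  then show ?thesis unfolding Good_def by blast
qed

end


type_synonym idx = "nat \<times> nat \<times> nat"

definition SUPN :: "seq \<Rightarrow> real" where
  "SUPN s = (SUP m. norm (s m))"

definition L1 :: "seq \<Rightarrow> real" where
  "L1 w = (\<Sum>n. norm (w n))"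

definition w1 :: "cmatrix \<Rightarrow> seq \<Rightarrow> (idx \<Rightarrow> complex) \<Rightarrow> seq" where
  "w1 A x z = (\<lambda>n. rs A n x + z (1, n, 0))"

definition w2 :: "cmatrix \<Rightarrow> seq \<Rightarrow> (idx \<Rightarrow> complex) \<Rightarrow> nat \<Rightarrow> seq" where
  "w2 A x z n = (\<lambda>m. (\<Sum>k<m. A n k * x k) + z (2, n, m) + (if 1 \<le> m then z (3, n, 0) else 0))"

definition QZ :: "cmatrix \<Rightarrow> real \<Rightarrow> nat \<Rightarrow> seq \<Rightarrow> (idx \<Rightarrow> complex) \<Rightarrow> real" where
  "QZ A C N x z = C * ((\<Sum>j<N. norm (x j + z (0, j, 0))) + L1 (w1 A x z) + (\<Sum>n<N. SUPN (w2 A x z n)))"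

definition finz :: "(idx \<Rightarrow> complex) \<Rightarrow> bool" where
  "finz z \<longleftrightarrow> finite {\<xi>. z \<xi> \<noteq> 0}"

subsection \<open>Generic seminorm facts\<close>

lemma SUPN_ge: "bdd_above (range (\<lambda>m. norm (s m))) \<Longrightarrow> norm (s m) \<le> SUPN s"
  unfolding SUPN_def by (rule cSUP_upper) auto

lemma SUPN_least: "(\<And>m. norm (s m) \<le> B) \<Longrightarrow> SUPN s \<le> B"
  unfolding SUPN_def by (rule cSUP_least) auto

lemma SUPN_nonneg: "bdd_above (range (\<lambda>m. norm (s m))) \<Longrightarrow> 0 \<le> SUPN s"
  by (rule order_trans[OF norm_ge_zero SUPN_ge])

lemma SUPN_add:
  assumes "bdd_above (range (\<lambda>m. norm (s m)))" "bdd_above (range (\<lambda>m. norm (s' m)))"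
  shows "SUPN (\<lambda>m. s m + s' m) \<le> SUPN s + SUPN s'"
proof (rule SUPN_least)
  fix m
  show "norm (s m + s' m) \<le> SUPN s + SUPN s'"
    by (rule order_trans[OF norm_triangle_ineq add_mono[OF SUPN_ge[OF assms(1)] SUPN_ge[OF assms(2)]]])
qed

lemma SUPN_scale:
  assumes b: "bdd_above (range (\<lambda>m. norm (s m)))"
  shows "SUPN (\<lambda>m. c * s m) = norm c * SUPN s"
proof (cases "c = 0")
  case True then show ?thesis by (simp add: SUPN_def)
next
  case False
  have "SUPN (\<lambda>m. c * s m) \<le> norm c * SUPN s"
    by (rule SUPN_least) (simp add: norm_mult mult_left_mono SUPN_ge[OF b])
  moreover have "norm c * SUPN s \<le> SUPN (\<lambda>m. c * s m)"
  proof -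
    have b2: "bdd_above (range (\<lambda>m. norm (c * s m)))"
    proof -
      obtain B where "\<And>m. norm (s m) \<le> B" using b by (auto simp: bdd_above_def)
      then have "\<And>m. norm (c * s m) \<le> norm c * B" by (simp add: norm_mult mult_left_mono)
      then show ?thesis by (auto simp: bdd_above_def)
    qed
    have "norm c * norm (s m) \<le> SUPN (\<lambda>m. c * s m)" for m
      using SUPN_ge[OF b2, of m] by (simp add: norm_mult)
    then have "SUPN s \<le> SUPN (\<lambda>m. c * s m) / norm c"
      using False by (intro SUPN_least) (simp add: field_simps)
    then show ?thesis using False by (simp add: field_simps)
  qed
  ultimately show ?thesis by simp
qed

lemma bdd_add: "bdd_above (range (\<lambda>m. norm (s m))) \<Longrightarrow> bdd_above (range (\<lambda>m. norm (s' m)))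
  \<Longrightarrow> bdd_above (range (\<lambda>m. norm (s m + s' m)))"
proof -
  assume "bdd_above (range (\<lambda>m. norm (s m)))" "bdd_above (range (\<lambda>m. norm (s' m)))"
  then obtain B B' where "\<And>m. norm (s m) \<le> B" "\<And>m. norm (s' m) \<le> B'" by (auto simp: bdd_above_def)
  then have "\<And>m. norm (s m + s' m) \<le> B + B'"
    by (meson add_mono norm_triangle_ineq order_trans)
  then show ?thesis by (auto simp: bdd_above_def)
qed

lemma L1_add: "summable (\<lambda>n. norm (w n)) \<Longrightarrow> summable (\<lambda>n. norm (w' n)) \<Longrightarrow>
   L1 (\<lambda>n. w n + w' n) \<le> L1 w + L1 w'"
proof -
  assume a: "summable (\<lambda>n. norm (w n))" and b: "summable (\<lambda>n. norm (w' n))"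
  have s: "summable (\<lambda>n. norm (w n) + norm (w' n))" by (rule summable_add[OF a b])
  have s2: "summable (\<lambda>n. norm (w n + w' n))"
    by (rule summable_comparison_test'[OF s, of 0]) (simp add: norm_triangle_ineq)
  have "(\<Sum>n. norm (w n + w' n)) \<le> (\<Sum>n. norm (w n) + norm (w' n))"
    by (rule suminf_le[OF norm_triangle_ineq s2 s])
  also have "\<dots> = (\<Sum>n. norm (w n)) + (\<Sum>n. norm (w' n))" by (rule suminf_add[OF a b, symmetric])
  finally show ?thesis unfolding L1_def .
qed

lemma L1_scale: "summable (\<lambda>n. norm (w n)) \<Longrightarrow> L1 (\<lambda>n. c * w n) = norm c * L1 w"
  unfolding L1_def by (simp add: norm_mult suminf_mult)

lemma L1_nonneg: "summable (\<lambda>n. norm (w n)) \<Longrightarrow> 0 \<le> L1 w"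
  unfolding L1_def by (rule suminf_nonneg) auto

lemma finz_slice:
  assumes "finz z" and "inj g"
  shows "finite {n. z (g n) \<noteq> 0}"
proof -
  have "{n. z (g n) \<noteq> 0} = g -` {\<xi>. z \<xi> \<noteq> 0}" by auto
  then show ?thesis using finite_vimageI[OF assms(1)[unfolded finz_def] assms(2)] by simp
qed

lemma finz_add: "finz z \<Longrightarrow> finz z' \<Longrightarrow> finz (\<lambda>\<xi>. z \<xi> + z' \<xi>)"
  unfolding finz_def by (rule finite_subset[of _ "{\<xi>. z \<xi> \<noteq> 0} \<union> {\<xi>. z' \<xi> \<noteq> 0}"]) auto

lemma finz_scale: "finz z \<Longrightarrow> finz (\<lambda>\<xi>. c * z \<xi>)"
  unfolding finz_def by (rule finite_subset[of _ "{\<xi>. z \<xi> \<noteq> 0}"]) auto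

lemma w1_summable:
  assumes x: "x \<in> lA A" and z: "finz z"
  shows "summable (\<lambda>n. norm (w1 A x z n))"
proof -
  have f: "finite {n. z (1, n, 0) \<noteq> 0}" by (rule finz_slice[OF z]) (auto simp: inj_def)
  have "summable (\<lambda>n. norm (z (1, n, 0)))" by (rule summable_finite[OF f]) auto
  then have "summable (\<lambda>n. norm (rs A n x) + norm (z (1, n, 0)))" by (intro summable_add lA_T x)
  then show ?thesis unfolding w1_def
    by (rule summable_comparison_test'[of _ 0]) (simp add: norm_triangle_ineq)
qed

lemma fin_norm_bound:
  assumes "finite F" "\<And>m. m \<notin> F \<Longrightarrow> f m = 0"
  shows "norm (f m) \<le> (\<Sum>m\<in>F. norm (f m))"
proof (cases "m \<in> F")
  case True then show ?thesis using assms(1) by (intro member_le_sum) auto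
next
  case False then show ?thesis using assms by (simp add: sum_nonneg)
qed

lemma w2_bdd:
  assumes x: "x \<in> lA A" and z: "finz z"
  shows "bdd_above (range (\<lambda>m. norm (w2 A x z n m)))"
proof -
  define F where "F = {m. z (2, n, m) \<noteq> 0}"
  have f: "finite F" unfolding F_def by (rule finz_slice[OF z]) (auto simp: inj_def)
  have "norm (w2 A x z n m) \<le> RR A n x + (\<Sum>m\<in>F. norm (z (2, n, m))) + norm (z (3, n, 0))" for m
  proof -
    have "norm (w2 A x z n m) \<le> norm (\<Sum>k<m. A n k * x k) + norm (z (2, n, m)) + norm (if 1 \<le> m then z (3, n, 0) else 0)"
      unfolding w2_def using norm_triangle_ineq[of "(\<Sum>k<m. A n k * x k) + z (2, n, m)" "if 1 \<le> m then z (3, n, 0) else 0"]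
        norm_triangle_ineq[of "\<Sum>k<m. A n k * x k" "z (2, n, m)"] by linarith
    moreover have "norm (\<Sum>k<m. A n k * x k) \<le> RR A n x" by (rule RR_ge[OF x])
    moreover have "norm (z (2, n, m)) \<le> (\<Sum>m\<in>F. norm (z (2, n, m)))"
      by (rule fin_norm_bound[OF f]) (auto simp: F_def)
    moreover have "norm (if 1 \<le> m then z (3, n, 0) else 0) \<le> norm (z (3, n, 0))" by simp
    ultimately show ?thesis by linarith
  qed
  then show ?thesis by (auto simp: bdd_above_def)
qed

lemma w1_add: "x \<in> lA A \<Longrightarrow> y \<in> lA A \<Longrightarrow>
  w1 A (\<lambda>k. x k + y k) (\<lambda>\<xi>. z \<xi> + z' \<xi>) = (\<lambda>n. w1 A x z n + w1 A y z' n)"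
  unfolding w1_def by (simp add: rs_add algebra_simps)

lemma w1_scale: "x \<in> lA A \<Longrightarrow> w1 A (\<lambda>k. c * x k) (\<lambda>\<xi>. c * z \<xi>) = (\<lambda>n. c * w1 A x z n)"
  unfolding w1_def by (simp add: rs_scale distrib_left)

lemma w2_add: "w2 A (\<lambda>k. x k + y k) (\<lambda>\<xi>. z \<xi> + z' \<xi>) n = (\<lambda>m. w2 A x z n m + w2 A y z' n m)"
  unfolding w2_def by (auto simp: distrib_left sum.distrib)

lemma w2_scale: "w2 A (\<lambda>k. c * x k) (\<lambda>\<xi>. c * z \<xi>) n = (\<lambda>m. c * w2 A x z n m)"
  unfolding w2_def by (auto simp: distrib_left sum_distrib_left mult.left_commute)

lemma QZ_sub:
  assumes x: "x \<in> lA A" and y: "y \<in> lA A" and z: "finz z" and z': "finz z'" and C: "C \<ge> 0"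
  shows "QZ A C N (\<lambda>k. x k + y k) (\<lambda>\<xi>. z \<xi> + z' \<xi>) \<le> QZ A C N x z + QZ A C N y z'"
proof -
  have a: "(\<Sum>j<N. norm (x j + y j + (z (0, j, 0) + z' (0, j, 0)))) \<le>
      (\<Sum>j<N. norm (x j + z (0, j, 0))) + (\<Sum>j<N. norm (y j + z' (0, j, 0)))"
  proof -
    have "norm (x j + y j + (z (0, j, 0) + z' (0, j, 0))) \<le> norm (x j + z (0, j, 0)) + norm (y j + z' (0, j, 0))" for j
    proof -
      have "x j + y j + (z (0, j, 0) + z' (0, j, 0)) = (x j + z (0, j, 0)) + (y j + z' (0, j, 0))"
        by (simp add: algebra_simps)
      then show ?thesis by (metis norm_triangle_ineq)
    qed
    then show ?thesis by (simp add: sum.distrib[symmetric] sum_mono)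
  qed
  have b: "L1 (w1 A (\<lambda>k. x k + y k) (\<lambda>\<xi>. z \<xi> + z' \<xi>)) \<le> L1 (w1 A x z) + L1 (w1 A y z')"
    unfolding w1_add[OF x y] by (intro L1_add w1_summable x y z z')
  have c: "(\<Sum>n<N. SUPN (w2 A (\<lambda>k. x k + y k) (\<lambda>\<xi>. z \<xi> + z' \<xi>) n)) \<le>
      (\<Sum>n<N. SUPN (w2 A x z n)) + (\<Sum>n<N. SUPN (w2 A y z' n))"
    unfolding w2_add sum.distrib[symmetric]
    by (intro sum_mono SUPN_add w2_bdd x y z z')
  show ?thesis unfolding QZ_def distrib_left[symmetric]
    by (intro mult_left_mono C) (use a b c in linarith)
qed

lemma QZ_scale:
  assumes x: "x \<in> lA A" and z: "finz z"
  shows "QZ A C N (\<lambda>k. c * x k) (\<lambda>\<xi>. c * z \<xi>) = norm c * QZ A C N x z"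
proof -
  have a: "(\<Sum>j<N. norm (c * x j + c * z (0, j, 0))) = norm c * (\<Sum>j<N. norm (x j + z (0, j, 0)))"
    by (simp add: sum_distrib_left norm_mult distrib_left[symmetric])
  have b: "L1 (w1 A (\<lambda>k. c * x k) (\<lambda>\<xi>. c * z \<xi>)) = norm c * L1 (w1 A x z)"
    unfolding w1_scale[OF x] by (intro L1_scale w1_summable x z)
  have c: "(\<Sum>n<N. SUPN (w2 A (\<lambda>k. c * x k) (\<lambda>\<xi>. c * z \<xi>) n)) = norm c * (\<Sum>n<N. SUPN (w2 A x z n))"
    unfolding w2_scale sum_distrib_left by (intro sum.cong refl SUPN_scale w2_bdd x z)
  show ?thesis unfolding QZ_def a b c by (simp add: distrib_left mult.left_commute)
qed

lemma QZ_zero: "QZ A C N x (\<lambda>\<xi>. 0) = C * PP A N x"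
proof -
  have "L1 (w1 A x (\<lambda>\<xi>. 0)) = TT A x" by (simp add: L1_def w1_def TT_def)
  moreover have "SUPN (w2 A x (\<lambda>\<xi>. 0) n) = RR A n x" for n
    by (simp add: SUPN_def w2_def RR_def)
  ultimately show ?thesis by (simp add: QZ_def PP_def)
qed


definition cc :: "(nat \<Rightarrow> real) \<Rightarrow> idx \<Rightarrow> complex" where
  "cc t \<xi> = complex_of_real (t (to_nat (\<xi>, False))) + \<i> * complex_of_real (t (to_nat (\<xi>, True)))"

definition QQ :: "cmatrix \<Rightarrow> real \<Rightarrow> nat \<Rightarrow> seq \<Rightarrow> (nat \<Rightarrow> real) \<Rightarrow> real" where
  "QQ A C N x t = QZ A C N x (cc t)"

lemma cc_add: "cc (\<lambda>i. t i + u i) = (\<lambda>\<xi>. cc t \<xi> + cc u \<xi>)"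
  by (auto simp: cc_def algebra_simps)

lemma cc_scale: "cc (\<lambda>i. r * t i) = (\<lambda>\<xi>. complex_of_real r * cc t \<xi>)"
  by (auto simp: cc_def algebra_simps)

lemma cc_zero: "cc (\<lambda>i. 0) = (\<lambda>\<xi>. 0)"
  by (auto simp: cc_def)

lemma cc_finz: assumes "fsupp t" shows "finz (cc t)"
proof -
  obtain K where K: "\<forall>i\<ge>K. t i = 0" using assms by (auto simp: fsupp_def)
  have "{\<xi>. cc t \<xi> \<noteq> 0} \<subseteq> fst ` ((to_nat :: idx \<times> bool \<Rightarrow> nat) -` {..<K})"
  proof
    fix \<xi> assume "\<xi> \<in> {\<xi>. cc t \<xi> \<noteq> 0}"
    then have "t (to_nat (\<xi>, False)) \<noteq> 0 \<or> t (to_nat (\<xi>, True)) \<noteq> 0" by (auto simp: cc_def)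
    then have "to_nat (\<xi>, False) < K \<or> to_nat (\<xi>, True) < K" using K by (meson not_le)
    then show "\<xi> \<in> fst ` ((to_nat :: idx \<times> bool \<Rightarrow> nat) -` {..<K})"
    proof (elim disjE)
      assume "to_nat (\<xi>, False) < K"
      then have "(\<xi>, False) \<in> (to_nat :: idx \<times> bool \<Rightarrow> nat) -` {..<K}" by simp
      then show ?thesis by (rule rev_image_eqI) simp
    next
      assume "to_nat (\<xi>, True) < K"
      then have "(\<xi>, True) \<in> (to_nat :: idx \<times> bool \<Rightarrow> nat) -` {..<K}" by simp
      then show ?thesis by (rule rev_image_eqI) simp
    qed
  qed
  moreover have "finite (fst ` ((to_nat :: idx \<times> bool \<Rightarrow> nat) -` {..<K}))"
    by (intro finite_imageI finite_vimageI) auto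
  ultimately show ?thesis unfolding finz_def by (rule finite_subset)
qed

lemma phi_zero: "(\<lambda>k. 0) \<in> phi"
  unfolding phi_def by blast

lemma phi_add: "x \<in> phi \<Longrightarrow> y \<in> phi \<Longrightarrow> (\<lambda>k. x k + y k) \<in> phi"
  unfolding phi_def
proof safe
  fix F G assume "finite F" "\<forall>k. k \<notin> F \<longrightarrow> x k = 0" "finite G" "\<forall>k. k \<notin> G \<longrightarrow> y k = 0"
  then show "\<exists>H. finite H \<and> (\<forall>k. k \<notin> H \<longrightarrow> x k + y k = 0)"
    by (intro exI[of _ "F \<union> G"]) auto
qed

lemma phi_scale: "x \<in> phi \<Longrightarrow> (\<lambda>k. c * x k) \<in> phi"
  unfolding phi_def by auto

lemma phi_summable: assumes "x \<in> phi" shows "summable x"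
proof -
  obtain F where "finite F" "\<forall>k. k \<notin> F \<longrightarrow> x k = 0" using assms unfolding phi_def by blast
  then show ?thesis by (intro summable_finite[of F]) auto
qed

lemma delta_phi: "delta j \<in> phi"
  unfolding phi_def delta_def by (intro CollectI exI[of _ "{j}"]) auto

lemma HB_applied:
  assumes phiX: "phi \<subseteq> lA A" and C: "C \<ge> 0"
    and bnd: "\<forall>x\<in>phi. norm (suminf x) \<le> C * PP A N x"
  shows "\<exists>val. \<forall>x\<in>phi. \<forall>z G. finite G \<longrightarrow> (\<forall>\<xi>. \<xi> \<notin> G \<longrightarrow> z \<xi> = 0) \<longrightarrow>
            Re (suminf x) + Re (\<Sum>\<xi>\<in>G. z \<xi> * val \<xi>) \<le> QZ A C N x z"
proof -
  interpret hb_setting phi "\<lambda>x. Re (suminf x)" "QQ A C N"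
  proof
    show "(\<lambda>k. 0) \<in> phi" by (rule phi_zero)
    show "(\<lambda>k. x k + y k) \<in> phi" if "x \<in> phi" "y \<in> phi" for x y by (rule phi_add[OF that])
    show "(\<lambda>k. complex_of_real r * x k) \<in> phi" if "x \<in> phi" for x r by (rule phi_scale[OF that])
    show "Re (\<Sum>k. x k + y k) = Re (suminf x) + Re (suminf y)" if "x \<in> phi" "y \<in> phi" for x y
      using suminf_add[OF phi_summable[OF that(1)] phi_summable[OF that(2)], symmetric] by simp
    show "Re (\<Sum>k. complex_of_real r * x k) = r * Re (suminf x)" if "x \<in> phi" for x r
      using suminf_mult[OF phi_summable[OF that], of "complex_of_real r"] by simp
    show "QQ A C N (\<lambda>k. x k + y k) (\<lambda>i. t i + u i) \<le> QQ A C N x t + QQ A C N y u"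
      if "x \<in> phi" "y \<in> phi" "fsupp t" "fsupp u" for x y t u
      unfolding QQ_def cc_add using that phiX by (intro QZ_sub cc_finz C) auto
    show "QQ A C N (\<lambda>k. complex_of_real r * x k) (\<lambda>i. r * t i) = \<bar>r\<bar> * QQ A C N x t"
      if "x \<in> phi" "fsupp t" for x t r
      unfolding QQ_def cc_scale using QZ_scale[of x A "cc t" C N "complex_of_real r"] that phiX cc_finz
      by auto
    show "Re (suminf x) \<le> QQ A C N x (\<lambda>i. 0)" if "x \<in> phi" for x
      unfolding QQ_def cc_zero QZ_zero using bnd that complex_Re_le_cmod order_trans by blast
  qed
  obtain c where c: "\<And>k x t. x \<in> phi \<Longrightarrow> (\<forall>i\<ge>k. t i = 0) \<Longrightarrow> Re (suminf x) + (\<Sum>i<k. t i * c i) \<le> QQ A C N x t"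
    using HB_nat by blast
  define val where "val (\<xi>::idx) = complex_of_real (c (to_nat (\<xi>, False))) - \<i> * complex_of_real (c (to_nat (\<xi>, True)))" for \<xi>
  have "Re (suminf x) + Re (\<Sum>\<xi>\<in>G. z \<xi> * val \<xi>) \<le> QZ A C N x z"
    if x: "x \<in> phi" and G: "finite G" and zG: "\<forall>\<xi>. \<xi> \<notin> G \<longrightarrow> z \<xi> = 0" for x and z :: "idx \<Rightarrow> complex" and G
  proof -
    define t where "t i = (if i \<in> range (to_nat :: idx \<times> bool \<Rightarrow> nat) then (case from_nat i of (\<xi>, b) \<Rightarrow> if b then Im (z \<xi>) else Re (z \<xi>)) else 0)" for i :: nat
    have t_enc: "t (to_nat (\<xi>, b)) = (if b then Im (z \<xi>) else Re (z \<xi>))" for \<xi> b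
      by (simp add: t_def)
    have cct: "cc t = z"
      by (rule ext) (simp add: cc_def t_enc complex_eq[symmetric])
    define H where "H = to_nat ` (G \<times> (UNIV :: bool set))"
    have Hfin: "finite H" unfolding H_def using G by simp
    define K where "K = Suc (Max (insert 0 H))"
    have tH: "t i = 0" if "i \<notin> H" for i
    proof (cases "i \<in> range (to_nat :: idx \<times> bool \<Rightarrow> nat)")
      case True
      then obtain p :: "idx \<times> bool" where p: "i = to_nat p" by blast
      obtain \<xi> b where pe: "p = (\<xi>, b)" by (cases p)
      have "\<xi> \<notin> G" using that p pe unfolding H_def by auto
      then have "z \<xi> = 0" using zG by blast
      then show ?thesis using p pe t_enc by simp
    next
      case False then show ?thesis by (simp add: t_def)
    qed
    have tK: "\<forall>i\<ge>K. t i = 0"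
    proof (intro allI impI)
      fix i assume "K \<le> i"
      have "i \<notin> H"
      proof
        assume "i \<in> H"
        then have "i \<le> Max (insert 0 H)" using Hfin by (intro Max_ge) auto
        then show False using \<open>K \<le> i\<close> unfolding K_def by simp
      qed
      then show "t i = 0" by (rule tH)
    qed
    have HK: "H \<subseteq> {..<K}"
      using Hfin Max_ge[of "insert 0 H"] unfolding K_def by (auto simp: less_Suc_eq_le)
    have "(\<Sum>i<K. t i * c i) = (\<Sum>i\<in>H. t i * c i)"
      by (rule sum.mono_neutral_right) (use HK tH in auto)
    also have "\<dots> = (\<Sum>p\<in>G \<times> (UNIV :: bool set). t (to_nat p) * c (to_nat p))"
      unfolding H_def by (rule sum.reindex[unfolded comp_def]) (simp add: inj_on_def)
    also have "\<dots> = (\<Sum>\<xi>\<in>G. \<Sum>b\<in>(UNIV :: bool set). t (to_nat (\<xi>, b)) * c (to_nat (\<xi>, b)))"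
      by (subst sum.cartesian_product) (simp add: case_prod_unfold)
    also have "\<dots> = (\<Sum>\<xi>\<in>G. Re (z \<xi> * val \<xi>))"
      by (intro sum.cong refl) (simp add: UNIV_bool t_enc val_def algebra_simps)
    also have "\<dots> = Re (\<Sum>\<xi>\<in>G. z \<xi> * val \<xi>)" by simp
    finally have "(\<Sum>i<K. t i * c i) = Re (\<Sum>\<xi>\<in>G. z \<xi> * val \<xi>)" .
    then show ?thesis using c[OF x tK] unfolding QQ_def cct by simp
  qed
  then show ?thesis by blast
qed


definition HBprop :: "cmatrix \<Rightarrow> real \<Rightarrow> nat \<Rightarrow> (idx \<Rightarrow> complex) \<Rightarrow> bool" where
  "HBprop A C N val \<longleftrightarrow> (\<forall>x\<in>phi. \<forall>z G. finite G \<longrightarrow> (\<forall>\<xi>. \<xi> \<notin> G \<longrightarrow> z \<xi> = 0) \<longrightarrow>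
            Re (suminf x) + Re (\<Sum>\<xi>\<in>G. z \<xi> * val \<xi>) \<le> QZ A C N x z)"

lemma finz_G: "finite G \<Longrightarrow> (\<forall>\<xi>. \<xi> \<notin> G \<longrightarrow> z \<xi> = 0) \<Longrightarrow> finz z"
  unfolding finz_def by (rule finite_subset[of _ G]) auto

lemma HB_abs:
  assumes H: "HBprop A C N val" and phiX: "phi \<subseteq> lA A"
    and x: "x \<in> phi" and G: "finite G" and zG: "\<forall>\<xi>. \<xi> \<notin> G \<longrightarrow> z \<xi> = 0"
  shows "\<bar>Re (suminf x) + Re (\<Sum>\<xi>\<in>G. z \<xi> * val \<xi>)\<bar> \<le> QZ A C N x z"
proof -
  have H': "\<And>x z G. x \<in> phi \<Longrightarrow> finite G \<Longrightarrow> (\<forall>\<xi>. \<xi> \<notin> G \<longrightarrow> z \<xi> = 0) \<Longrightarrow>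
      Re (suminf x) + Re (\<Sum>\<xi>\<in>G. z \<xi> * val \<xi>) \<le> QZ A C N x z"
    using H unfolding HBprop_def by blast
  have up: "Re (suminf x) + Re (\<Sum>\<xi>\<in>G. z \<xi> * val \<xi>) \<le> QZ A C N x z"
    by (rule H'[OF x G zG])
  have x': "(\<lambda>k. (-1) * x k) \<in> phi" by (rule phi_scale[OF x])
  have "Re (suminf (\<lambda>k. (-1) * x k)) + Re (\<Sum>\<xi>\<in>G. (-1) * z \<xi> * val \<xi>) \<le> QZ A C N (\<lambda>k. (-1) * x k) (\<lambda>\<xi>. (-1) * z \<xi>)"
    by (rule H'[OF x' G]) (use zG in simp)
  also have "QZ A C N (\<lambda>k. (-1) * x k) (\<lambda>\<xi>. (-1) * z \<xi>) = QZ A C N x z"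
    using QZ_scale[of x A z C N "-1"] x phiX finz_G[OF G zG] by auto
  finally have "- (Re (suminf x) + Re (\<Sum>\<xi>\<in>G. z \<xi> * val \<xi>)) \<le> QZ A C N x z"
    using suminf_minus[OF phi_summable[OF x]] by (simp add: sum_negf)
  then show ?thesis using up by linarith
qed

lemma rs_zero: "rs A n (\<lambda>k. 0) = 0"
  by (simp add: rs_def)

lemma SUPN_zero: "SUPN (\<lambda>m. 0) = 0"
  by (simp add: SUPN_def)

lemma beta_bound:
  assumes H: "HBprop A C N val" and phiX: "phi \<subseteq> lA A"
  shows "norm (val (1, n, 0)) \<le> 2 * C"
proof -
  have one: "\<bar>Re (\<omega> * val (1, n, 0))\<bar> \<le> C" if "norm \<omega> = 1" for \<omega>
  proof -
    define z where "z \<xi> = (if \<xi> = (1, n, 0) then \<omega> else 0)" for \<xi> :: idx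
    have "\<bar>Re (suminf (\<lambda>k. 0::complex)) + Re (\<Sum>\<xi>\<in>{(1, n, 0)}. z \<xi> * val \<xi>)\<bar> \<le> QZ A C N (\<lambda>k. 0) z"
      by (rule HB_abs[OF H phiX phi_zero]) (auto simp: z_def)
    moreover have "QZ A C N (\<lambda>k. 0) z = C"
    proof -
      have "w1 A (\<lambda>k. 0) z = (\<lambda>n'. if n' = n then \<omega> else 0)"
        by (auto simp: w1_def rs_zero z_def)
      then have "L1 (w1 A (\<lambda>k. 0) z) = 1"
        unfolding L1_def using that sums_single[of n "\<lambda>_. 1::real"]
        by (simp add: if_distrib[of norm] sums_iff cong: if_cong)
      moreover have "w2 A (\<lambda>k. 0) z n' = (\<lambda>m. 0)" for n' by (auto simp: w2_def z_def)
      moreover have "z (0, j, 0) = 0" for j by (simp add: z_def)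
      ultimately show ?thesis by (simp add: QZ_def SUPN_zero)
    qed
    ultimately show ?thesis by (simp add: z_def)
  qed
  have "\<bar>Re (val (1, n, 0))\<bar> \<le> C" using one[of 1] by simp
  moreover have "\<bar>Im (val (1, n, 0))\<bar> \<le> C" using one[of \<i>] by simp
  ultimately show ?thesis using cmod_le[of "val (1, n, 0)"] by linarith
qed


lemma eta_bound:
  assumes H: "HBprop A C N val" and phiX: "phi \<subseteq> lA A" and C: "C \<ge> 0"
    and n: "n < N" and F: "finite F" and e: "\<And>m. norm (e m) \<le> 1"
  shows "Re (\<Sum>m\<in>F. e m * val (2, n, m)) \<le> C"
proof -
  define z where "z = (\<lambda>(\<kappa>::nat, n'::nat, m::nat). if \<kappa> = 2 \<and> n' = n \<and> m \<in> F then e m else (0::complex))"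
  define G where "G = (\<lambda>m. (2::nat, n, m)) ` F"
  have G: "finite G" using F by (simp add: G_def)
  have zG: "\<forall>\<xi>. \<xi> \<notin> G \<longrightarrow> z \<xi> = 0" by (auto simp: z_def G_def)
  have sumG: "(\<Sum>\<xi>\<in>G. z \<xi> * val \<xi>) = (\<Sum>m\<in>F. e m * val (2, n, m))"
    unfolding G_def by (subst sum.reindex) (auto simp: inj_on_def z_def)
  have "\<bar>Re (suminf (\<lambda>k. 0::complex)) + Re (\<Sum>\<xi>\<in>G. z \<xi> * val \<xi>)\<bar> \<le> QZ A C N (\<lambda>k. 0) z"
    by (rule HB_abs[OF H phiX phi_zero G zG])
  moreover have "QZ A C N (\<lambda>k. 0) z \<le> C"
  proof -
    have "w1 A (\<lambda>k. 0) z = (\<lambda>n'. 0)" by (auto simp: w1_def rs_zero z_def)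
    then have l1: "L1 (w1 A (\<lambda>k. 0) z) = 0" by (simp add: L1_def)
    have w2: "w2 A (\<lambda>k. 0) z n' = (\<lambda>m. if n' = n \<and> m \<in> F then e m else 0)" for n'
      by (auto simp: w2_def z_def)
    have "(\<Sum>n'<N. SUPN (w2 A (\<lambda>k. 0) z n')) = (\<Sum>n'<N. if n' = n then SUPN (\<lambda>m. if m \<in> F then e m else 0) else 0)"
      by (intro sum.cong refl) (auto simp: w2 SUPN_zero)
    also have "\<dots> = SUPN (\<lambda>m. if m \<in> F then e m else 0)" using n by simp
    also have "\<dots> \<le> 1" by (rule SUPN_least) (auto intro: e)
    finally have s: "(\<Sum>n'<N. SUPN (w2 A (\<lambda>k. 0) z n')) \<le> 1" .
    have z0: "z (0, j, 0) = 0" for j by (simp add: z_def)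
    have "QZ A C N (\<lambda>k. 0) z = C * (\<Sum>n'<N. SUPN (w2 A (\<lambda>k. 0) z n'))"
      by (simp add: QZ_def l1 z0)
    also have "\<dots> \<le> C * 1" by (intro mult_left_mono s C)
    finally show ?thesis by simp
  qed
  ultimately show ?thesis using sumG by simp
qed

lemma eta_summable:
  assumes H: "HBprop A C N val" and phiX: "phi \<subseteq> lA A" and C: "C \<ge> 0" and n: "n < N"
  shows "summable (\<lambda>m. norm (val (2, n, m)))"
proof (rule summableI_nonneg_bounded)
  fix M
  define v where "v m = val (2, n, m)" for m
  have re: "(\<Sum>m<M. \<bar>Re (v m)\<bar>) \<le> C"
  proof -
    have "Re (\<Sum>m\<in>{..<M}. complex_of_real (sgn (Re (v m))) * val (2, n, m)) \<le> C"
      by (rule eta_bound[OF H phiX C n]) (auto simp: abs_sgn_eq)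
    moreover have "Re (\<Sum>m\<in>{..<M}. complex_of_real (sgn (Re (v m))) * val (2, n, m)) = (\<Sum>m<M. \<bar>Re (v m)\<bar>)"
      by (simp add: v_def abs_sgn mult.commute)
    ultimately show ?thesis by simp
  qed
  have im: "(\<Sum>m<M. \<bar>Im (v m)\<bar>) \<le> C"
  proof -
    have "Re (\<Sum>m\<in>{..<M}. (- \<i> * complex_of_real (sgn (Im (v m)))) * val (2, n, m)) \<le> C"
      by (rule eta_bound[OF H phiX C n]) (auto simp: abs_sgn_eq norm_mult)
    moreover have "Re (\<Sum>m\<in>{..<M}. (- \<i> * complex_of_real (sgn (Im (v m)))) * val (2, n, m)) = (\<Sum>m<M. \<bar>Im (v m)\<bar>)"
      by (simp add: v_def abs_sgn mult.commute)
    ultimately show ?thesis by simp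
  qed
  have "(\<Sum>m<M. norm (v m)) \<le> (\<Sum>m<M. \<bar>Re (v m)\<bar> + \<bar>Im (v m)\<bar>)"
    by (intro sum_mono cmod_le)
  also have "\<dots> \<le> 2 * C" using re im by (simp add: sum.distrib)
  finally show "(\<Sum>m<M. norm (val (2, n, m))) \<le> 2 * C" by (simp add: v_def)
qed simp


definition theta :: "(idx \<Rightarrow> complex) \<Rightarrow> nat \<Rightarrow> nat \<Rightarrow> complex" where
  "theta val n k = val (3, n, 0) - (\<Sum>m\<in>{1..k}. val (2, n, m))"

lemma col_abs_summable: assumes "phi \<subseteq> lA A" shows "summable (\<lambda>n. norm (A n k))"
  using lA_T[of "delta k" A] assms delta_phi[of k] by (auto simp: rs_delta)

lemma tail_eq:
  fixes a :: "nat \<Rightarrow> real" assumes "summable a"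
  shows "(\<Sum>n. if M \<le> n then a n else 0) = (\<Sum>n. a n) - (\<Sum>n<M. a n)"
proof -
  have s2: "summable (\<lambda>n. if n < M then a n else 0)" by (rule summable_finite[of "{..<M}"]) auto
  have "(\<lambda>n. a n) = (\<lambda>n. (if M \<le> n then a n else 0) + (if n < M then a n else 0))" by auto
  then have "(\<Sum>n. a n) = (\<Sum>n. (if M \<le> n then a n else 0) + (if n < M then a n else 0))" by simp
  also have "\<dots> = (\<Sum>n. if M \<le> n then a n else 0) + (\<Sum>n. if n < M then a n else 0)"
  proof (rule suminf_add[symmetric, OF _ s2])
    have "(\<lambda>n. if M \<le> n then a n else 0) = (\<lambda>n. a n - (if n < M then a n else 0))" by auto
    then show "summable (\<lambda>n. if M \<le> n then a n else 0)" using summable_diff[OF assms s2] by simp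
  qed
  also have "(\<Sum>n. if n < M then a n else 0) = (\<Sum>n<M. a n)"
    by (subst suminf_finite[of "{..<M}"]) auto
  finally show ?thesis by simp
qed

lemma col_step:
  assumes H: "HBprop A C N val" and phiX: "phi \<subseteq> lA A" and C: "C \<ge> 0"
  shows "\<bar>Re \<omega> - Re (\<omega> * ((if k0 < N then val (0, k0, 0) else 0) + (\<Sum>n<M. A n k0 * val (1, n, 0))
            + (\<Sum>n<N. A n k0 * theta val n k0)))\<bar>
         \<le> C * norm \<omega> * (\<Sum>n. if M \<le> n then norm (A n k0) else 0)"
proof -
  define x where "x = (\<lambda>k. \<omega> * delta k0 k)"
  have x: "x \<in> phi" unfolding x_def by (rule phi_scale[OF delta_phi])
  have sx: "suminf x = \<omega>"
  proof -
    have "x = (\<lambda>k. if k = k0 then \<omega> else 0)" by (auto simp: x_def delta_def)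
    then show ?thesis using sums_single[of k0 "\<lambda>_. \<omega>"] by (simp add: sums_iff)
  qed
  define G0 :: "idx set" where "G0 = (if k0 < N then {(0, k0, 0)} else {})"
  define G1 :: "idx set" where "G1 = (\<lambda>n. (1, n, 0)) ` {..<M}"
  define G2 :: "idx set" where "G2 = (\<lambda>(n, m). (2, n, m)) ` ({..<N} \<times> {1..k0})"
  define G3 :: "idx set" where "G3 = (\<lambda>n. (3, n, 0)) ` {..<N}"
  define z where "z \<xi> = (if \<xi> \<in> G0 then - \<omega> else if \<xi> \<in> G1 then - \<omega> * A (fst (snd \<xi>)) k0
      else if \<xi> \<in> G2 then \<omega> * A (fst (snd \<xi>)) k0 else if \<xi> \<in> G3 then - \<omega> * A (fst (snd \<xi>)) k0 else 0)"
    for \<xi> :: idx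
  define G where "G = G0 \<union> G1 \<union> G2 \<union> G3"
  have fin: "finite G0" "finite G1" "finite G2" "finite G3"
    by (auto simp: G0_def G1_def G2_def G3_def)
  have Gfin: "finite G" using fin by (simp add: G_def)
  have zG: "\<forall>\<xi>. \<xi> \<notin> G \<longrightarrow> z \<xi> = 0" by (auto simp: z_def G_def)
  have disj: "G0 \<inter> G1 = {}" "(G0 \<union> G1) \<inter> G2 = {}" "(G0 \<union> G1 \<union> G2) \<inter> G3 = {}"
    by (auto simp: G0_def G1_def G2_def G3_def)
  have s0: "(\<Sum>\<xi>\<in>G0. z \<xi> * val \<xi>) = - \<omega> * (if k0 < N then val (0, k0, 0) else 0)"
    by (auto simp: G0_def z_def)
  have s1: "(\<Sum>\<xi>\<in>G1. z \<xi> * val \<xi>) = - \<omega> * (\<Sum>n<M. A n k0 * val (1, n, 0))"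
  proof -
    have "(\<Sum>\<xi>\<in>G1. z \<xi> * val \<xi>) = (\<Sum>n<M. z (1, n, 0) * val (1, n, 0))"
      unfolding G1_def by (subst sum.reindex) (auto simp: inj_on_def)
    also have "\<dots> = (\<Sum>n<M. - \<omega> * (A n k0 * val (1, n, 0)))"
      by (intro sum.cong refl) (auto simp: z_def G0_def G1_def)
    finally show ?thesis by (simp add: sum_distrib_left)
  qed
  have s2: "(\<Sum>\<xi>\<in>G2. z \<xi> * val \<xi>) = \<omega> * (\<Sum>n<N. A n k0 * (\<Sum>m\<in>{1..k0}. val (2, n, m)))"
  proof -
    have "(\<Sum>\<xi>\<in>G2. z \<xi> * val \<xi>) = (\<Sum>p\<in>{..<N} \<times> {1..k0}. z (2, fst p, snd p) * val (2, fst p, snd p))"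
      unfolding G2_def by (subst sum.reindex) (auto simp: inj_on_def case_prod_unfold)
    also have "\<dots> = (\<Sum>n<N. \<Sum>m\<in>{1..k0}. z (2, n, m) * val (2, n, m))"
      by (subst sum.cartesian_product) (simp add: case_prod_unfold)
    also have "\<dots> = (\<Sum>n<N. \<Sum>m\<in>{1..k0}. \<omega> * (A n k0 * val (2, n, m)))"
      by (intro sum.cong refl) (auto simp: z_def G0_def G1_def G2_def)
    finally show ?thesis by (simp add: sum_distrib_left)
  qed
  have s3: "(\<Sum>\<xi>\<in>G3. z \<xi> * val \<xi>) = - \<omega> * (\<Sum>n<N. A n k0 * val (3, n, 0))"
  proof -
    have "(\<Sum>\<xi>\<in>G3. z \<xi> * val \<xi>) = (\<Sum>n<N. z (3, n, 0) * val (3, n, 0))"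
      unfolding G3_def by (subst sum.reindex) (auto simp: inj_on_def)
    also have "\<dots> = (\<Sum>n<N. - \<omega> * (A n k0 * val (3, n, 0)))"
      by (intro sum.cong refl) (auto simp: z_def G0_def G1_def G2_def G3_def)
    finally show ?thesis by (simp add: sum_distrib_left)
  qed
  have sumG: "(\<Sum>\<xi>\<in>G. z \<xi> * val \<xi>) = - \<omega> * ((if k0 < N then val (0, k0, 0) else 0)
      + (\<Sum>n<M. A n k0 * val (1, n, 0)) + (\<Sum>n<N. A n k0 * theta val n k0))"
  proof -
    have "(\<Sum>\<xi>\<in>G. z \<xi> * val \<xi>) = (\<Sum>\<xi>\<in>G0. z \<xi> * val \<xi>) + (\<Sum>\<xi>\<in>G1. z \<xi> * val \<xi>)
        + (\<Sum>\<xi>\<in>G2. z \<xi> * val \<xi>) + (\<Sum>\<xi>\<in>G3. z \<xi> * val \<xi>)"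
      unfolding G_def using fin disj by (simp add: sum.union_disjoint)
    also have "\<dots> = - \<omega> * ((if k0 < N then val (0, k0, 0) else 0)
      + (\<Sum>n<M. A n k0 * val (1, n, 0)) + (\<Sum>n<N. A n k0 * theta val n k0))"
      unfolding s0 s1 s2 s3 theta_def
      by (simp add: algebra_simps sum_subtractf sum_distrib_left sum_negf)
    finally show ?thesis .
  qed
  have z0: "z (0, j, 0) = (if j = k0 \<and> k0 < N then - \<omega> else 0)" for j
    by (auto simp: z_def G0_def G1_def G2_def G3_def)
  have z1: "z (1, n, 0) = (if n < M then - \<omega> * A n k0 else 0)" for n
    by (auto simp: z_def G0_def G1_def G2_def G3_def)
  have z2: "z (2, n, m) = (if n < N \<and> 1 \<le> m \<and> m \<le> k0 then \<omega> * A n k0 else 0)" for n m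
    by (auto simp: z_def G0_def G1_def G2_def G3_def)
  have z3: "z (3, n, 0) = (if n < N then - \<omega> * A n k0 else 0)" for n
    by (auto simp: z_def G0_def G1_def G2_def G3_def)
  have QZv: "QZ A C N x z = C * norm \<omega> * (\<Sum>n. if M \<le> n then norm (A n k0) else 0)"
  proof -
    have a: "(\<Sum>j<N. norm (x j + z (0, j, 0))) = 0"
      by (intro sum.neutral) (auto simp: x_def delta_def z0)
    have rsx: "rs A n x = \<omega> * A n k0" for n
      unfolding x_def using rs_scale[OF subsetD[OF phiX delta_phi], of n \<omega>] by (simp add: rs_delta)
    have "w1 A x z = (\<lambda>n. if M \<le> n then \<omega> * A n k0 else 0)"
      unfolding w1_def rsx z1 by auto
    then have b: "L1 (w1 A x z) = norm \<omega> * (\<Sum>n. if M \<le> n then norm (A n k0) else 0)"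
      unfolding L1_def by (simp add: if_distrib[of norm] norm_mult cong: if_cong)
        (subst suminf_mult[symmetric], rule summable_comparison_test'[OF col_abs_summable[OF phiX], of 0], auto intro: suminf_cong)
    have ps: "(\<Sum>k<m. A n k * x k) = (if k0 < m then \<omega> * A n k0 else 0)" for n m
    proof -
      have "(\<Sum>k<m. A n k * x k) = (\<Sum>k<m. if k = k0 then \<omega> * A n k0 else 0)"
        by (intro sum.cong refl) (auto simp: x_def delta_def)
      then show ?thesis by simp
    qed
    have "w2 A x z n = (\<lambda>m. 0)" if "n < N" for n
      using that by (auto simp: w2_def ps z2 z3)
    then have c: "(\<Sum>n<N. SUPN (w2 A x z n)) = 0" by (simp add: SUPN_zero)
    show ?thesis unfolding QZ_def a b c by simp
  qed
  have "\<bar>Re (suminf x) + Re (\<Sum>\<xi>\<in>G. z \<xi> * val \<xi>)\<bar> \<le> QZ A C N x z"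
    by (rule HB_abs[OF H phiX x Gfin zG])
  then show ?thesis unfolding sx sumG QZv by simp
qed


lemma beta_summable:
  assumes H: "HBprop A C N val" and phiX: "phi \<subseteq> lA A"
  shows "summable (\<lambda>n. norm (A n k0 * val (1, n, 0)))"
proof (rule summable_comparison_test'[OF summable_mult[OF col_abs_summable[OF phiX], of "2 * C"], of 0])
  fix n
  show "norm (norm (A n k0 * val (1, n, 0))) \<le> 2 * C * norm (A n k0)"
    using beta_bound[OF H phiX, of n] by (simp add: norm_mult mult_left_mono mult.commute)
qed

lemma col_identity:
  assumes H: "HBprop A C N val" and phiX: "phi \<subseteq> lA A" and C: "C \<ge> 0"
  shows "(if k0 < N then val (0, k0, 0) else 0) + (\<Sum>n. A n k0 * val (1, n, 0))
            + (\<Sum>n<N. A n k0 * theta val n k0) = 1"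
    (is "?E = 1")
proof -
  define P where "P = (if k0 < N then val (0, k0, 0) else 0)"
  define R where "R = (\<Sum>n<N. A n k0 * theta val n k0)"
  define a where "a n = A n k0 * val (1, n, 0)" for n
  have sa: "summable a" unfolding a_def by (rule summable_norm_cancel[OF beta_summable[OF H phiX]])
  have na: "summable (\<lambda>n. norm (A n k0))" by (rule col_abs_summable[OF phiX])
  have EM: "(\<lambda>M. P + (\<Sum>n<M. a n) + R) \<longlonglongrightarrow> P + (\<Sum>n. a n) + R"
    by (intro tendsto_add tendsto_const summable_LIMSEQ sa)
  have tail: "(\<lambda>M. (\<Sum>n. if M \<le> n then norm (A n k0) else 0)) \<longlonglongrightarrow> 0"
  proof -
    have "(\<lambda>M. (\<Sum>n. norm (A n k0)) - (\<Sum>n<M. norm (A n k0))) \<longlonglongrightarrow> (\<Sum>n. norm (A n k0)) - (\<Sum>n. norm (A n k0))"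
      by (intro tendsto_diff tendsto_const summable_LIMSEQ na)
    then show ?thesis by (simp add: tail_eq[OF na])
  qed
  have key: "\<bar>Re \<omega> - Re (\<omega> * ?E)\<bar> \<le> 0" for \<omega>
  proof -
    have lim1: "(\<lambda>M. \<bar>Re \<omega> - Re (\<omega> * (P + (\<Sum>n<M. a n) + R))\<bar>) \<longlonglongrightarrow> \<bar>Re \<omega> - Re (\<omega> * (P + (\<Sum>n. a n) + R))\<bar>"
      by (intro tendsto_rabs tendsto_diff tendsto_const tendsto_Re tendsto_mult EM)
    have lim2: "(\<lambda>M. C * norm \<omega> * (\<Sum>n. if M \<le> n then norm (A n k0) else 0)) \<longlonglongrightarrow> C * norm \<omega> * 0"
      by (intro tendsto_mult tendsto_const tail)
    have le: "\<bar>Re \<omega> - Re (\<omega> * (P + (\<Sum>n<M. a n) + R))\<bar> \<le> C * norm \<omega> * (\<Sum>n. if M \<le> n then norm (A n k0) else 0)" for M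
      using col_step[OF H phiX C, of \<omega> k0 M] by (simp add: P_def R_def a_def)
    have "\<bar>Re \<omega> - Re (\<omega> * (P + (\<Sum>n. a n) + R))\<bar> \<le> C * norm \<omega> * 0"
      by (rule LIMSEQ_le[OF lim1 lim2]) (use le in auto)
    then show ?thesis by (simp add: P_def R_def a_def)
  qed
  have "Re ?E = 1" using key[of 1] by simp
  moreover have "Im ?E = 0" using key[of \<i>] by simp
  ultimately show ?thesis by (simp add: complex_eq_iff)
qed


lemma sum_2R: "(\<Sum>r<2 * R. h r) = (\<Sum>n<R. h (2 * n) + h (2 * n + 1))"
  for h :: "nat \<Rightarrow> 'a::comm_monoid_add"
proof (induction R)
  case 0 then show ?case by simp
next
  case (Suc R)
  have "2 * Suc R = Suc (Suc (2 * R))" by simp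
  then show ?case using Suc by (simp add: add.assoc)
qed

lemma abel_identity:
  fixes th y :: "nat \<Rightarrow> complex"
  shows "(\<Sum>k<K. th k * y k) = th K * (\<Sum>k<K. y k) - (\<Sum>k<K. (th (Suc k) - th k) * (\<Sum>j<Suc k. y j))"
proof (induction K)
  case 0 then show ?case by simp
next
  case (Suc K)
  have "(\<Sum>k<Suc K. th k * y k) = (\<Sum>k<K. th k * y k) + th K * y K" by simp
  also have "\<dots> = th K * (\<Sum>k<K. y k) - (\<Sum>k<K. (th (Suc k) - th k) * (\<Sum>j<Suc k. y j)) + th K * y K"
    by (simp only: Suc.IH)
  also have "\<dots> = th (Suc K) * (\<Sum>k<Suc K. y k) - (\<Sum>k<Suc K. (th (Suc k) - th k) * (\<Sum>j<Suc k. y j))"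
  proof -
    define S where "S = (\<Sum>k<K. y k)"
    define T where "T = (\<Sum>k<K. (th (Suc k) - th k) * (\<Sum>j<Suc k. y j))"
    have e1: "(\<Sum>k<Suc K. y k) = S + y K" by (simp add: S_def)
    have e2: "(\<Sum>k<Suc K. (th (Suc k) - th k) * (\<Sum>j<Suc k. y j)) = T + (th (Suc K) - th K) * (S + y K)"
      by (simp add: T_def S_def)
    have "th K * S - T + th K * y K = th (Suc K) * (S + y K) - (T + (th (Suc K) - th K) * (S + y K))"
      by (simp add: algebra_simps)
    then show ?thesis unfolding e1 e2 S_def[symmetric] T_def[symmetric] .
  qed
  finally show ?case .
qed

lemma abel_summable:
  fixes th y :: "nat \<Rightarrow> complex"
  assumes bv: "summable (\<lambda>k. norm (th (Suc k) - th k))" and sy: "summable y"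
  shows "summable (\<lambda>k. th k * y k)"
proof -
  have thc: "convergent th"
  proof -
    have "summable (\<lambda>k. th (Suc k) - th k)" by (rule summable_norm_cancel[OF bv])
    then have "convergent (\<lambda>K. \<Sum>k<K. th (Suc k) - th k)" by (simp add: summable_iff_convergent)
    then have "convergent (\<lambda>K. th K - th 0)" by (simp add: sum_lessThan_telescope)
    then have "convergent (\<lambda>K. (th K - th 0) + th 0)" by (intro convergent_add convergent_const)
    then show ?thesis by simp
  qed
  have Sc: "convergent (\<lambda>K. \<Sum>k<K. y k)" using sy by (simp add: summable_iff_convergent)
  then have "Bseq (\<lambda>K. \<Sum>k<K. y k)" by (rule convergent_imp_Bseq)
  then obtain B where B: "\<And>K. norm (\<Sum>k<K. y k) \<le> B" by (auto simp: Bseq_def intro: less_imp_le)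
  have s3: "summable (\<lambda>k. (th (Suc k) - th k) * (\<Sum>j<Suc k. y j))"
  proof (rule summable_norm_cancel, rule summable_comparison_test'[OF summable_mult2[OF bv, of B], of 0])
    fix k
    show "norm (norm ((th (Suc k) - th k) * (\<Sum>j<Suc k. y j))) \<le> norm (th (Suc k) - th k) * B"
      using B[of "Suc k"] by (simp add: norm_mult mult_left_mono)
  qed
  have "convergent (\<lambda>K. th K * (\<Sum>k<K. y k) - (\<Sum>k<K. (th (Suc k) - th k) * (\<Sum>j<Suc k. y j)))"
  proof (rule convergent_diff[OF convergent_mult[OF thc Sc]])
    show "convergent (\<lambda>K. \<Sum>k<K. (th (Suc k) - th k) * (\<Sum>j<Suc k. y j))"
      using s3 by (simp only: summable_iff_convergent)
  qed
  moreover have "(\<lambda>K. \<Sum>k<K. th k * y k) = (\<lambda>K. th K * (\<Sum>k<K. y k) - (\<Sum>k<K. (th (Suc k) - th k) * (\<Sum>j<Suc k. y j)))"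
    by (rule ext) (rule abel_identity)
  ultimately show ?thesis by (simp only: summable_iff_convergent)
qed

lemma interleave:
  fixes f g :: "nat \<Rightarrow> complex"
  assumes nf: "summable (\<lambda>n. norm (f n))" and ng: "summable (\<lambda>n. norm (g n))"
  shows "summable (\<lambda>r. norm (if even r then f (r div 2) else g (r div 2)))"
    and "(\<lambda>r. if even r then f (r div 2) else g (r div 2)) sums (suminf f + suminf g)"
proof -
  define h where "h r = (if even r then f (r div 2) else g (r div 2))" for r
  have h2: "h (2 * n) = f n" "h (Suc (2 * n)) = g n" for n by (auto simp: h_def)
  have nh: "summable (\<lambda>r. norm (h r))"
  proof (rule summableI_nonneg_bounded)
    fix R
    have "(\<Sum>r<R. norm (h r)) \<le> (\<Sum>r<2 * R. norm (h r))" by (intro sum_mono2) auto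
    also have "\<dots> = (\<Sum>n<R. norm (f n) + norm (g n))" by (simp add: sum_2R h2)
    also have "\<dots> \<le> (\<Sum>n. norm (f n) + norm (g n))"
      by (intro sum_le_suminf summable_add nf ng) auto
    finally show "(\<Sum>r<R. norm (h r)) \<le> (\<Sum>n. norm (f n) + norm (g n))" .
  qed simp
  then show "summable (\<lambda>r. norm (if even r then f (r div 2) else g (r div 2)))" by (simp add: h_def)
  have sh: "summable h" by (rule summable_norm_cancel[OF nh])
  have "(\<lambda>R. \<Sum>r<2 * R. h r) \<longlonglongrightarrow> suminf h"
  proof -
    have sm: "strict_mono (\<lambda>R::nat. 2 * R)" by (simp add: strict_mono_def)
    show ?thesis using LIMSEQ_subseq_LIMSEQ[OF summable_LIMSEQ[OF sh] sm] by (simp only: comp_def)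
  qed
  moreover have "(\<lambda>R. \<Sum>r<2 * R. h r) \<longlonglongrightarrow> suminf f + suminf g"
  proof -
    have "(\<lambda>R. \<Sum>n<R. f n + g n) \<longlonglongrightarrow> (\<Sum>n. f n + g n)"
      by (intro summable_LIMSEQ summable_add summable_norm_cancel[OF nf] summable_norm_cancel[OF ng])
    moreover have "(\<lambda>R. \<Sum>r<2 * R. h r) = (\<lambda>R. \<Sum>n<R. f n + g n)"
      by (rule ext) (simp only: sum_2R h2 Suc_eq_plus1[symmetric])
    moreover have "suminf f + suminf g = (\<Sum>n. f n + g n)"
      by (rule suminf_add[OF summable_norm_cancel[OF nf] summable_norm_cancel[OF ng]])
    ultimately show ?thesis by simp
  qed
  ultimately have "suminf h = suminf f + suminf g" by (rule LIMSEQ_unique)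
  then show "(\<lambda>r. if even r then f (r div 2) else g (r div 2)) sums (suminf f + suminf g)"
    using sh by (simp add: h_def[symmetric] sums_iff)
qed

lemma even_sub_summable:
  fixes h :: "nat \<Rightarrow> real"
  assumes "summable h" "\<And>r. 0 \<le> h r"
  shows "summable (\<lambda>n. h (2 * n))"
proof (rule summableI_nonneg_bounded)
  fix R
  have "(\<Sum>n<R. h (2 * n)) \<le> (\<Sum>n<R. h (2 * n) + h (2 * n + 1))" by (intro sum_mono) (simp add: assms)
  also have "\<dots> = (\<Sum>r<2 * R. h r)" by (simp add: sum_2R)
  also have "\<dots> \<le> suminf h" by (intro sum_le_suminf assms) auto
  finally show "(\<Sum>n<R. h (2 * n)) \<le> suminf h" .
qed (simp add: assms)


lemma theta_bv:
  assumes H: "HBprop A C N val" and phiX: "phi \<subseteq> lA A" and C: "C \<ge> 0" and n: "n < N"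
  shows "summable (\<lambda>k. norm (theta val n (Suc k) - theta val n k))"
proof -
  have eq: "theta val n (Suc k) - theta val n k = - val (2, n, Suc k)" for k
  proof -
    have "{1..Suc k} = insert (Suc k) {1..k}" by auto
    then have "(\<Sum>m\<in>{1..Suc k}. val (2, n, m)) = val (2, n, Suc k) + (\<Sum>m\<in>{1..k}. val (2, n, m))"
      by simp
    then show ?thesis by (simp add: theta_def)
  qed
  have "summable (\<lambda>k. norm (val (2, n, Suc k)))"
    using eta_summable[OF H phiX C n] by (subst summable_Suc_iff)
  then show ?thesis by (simp add: eq)
qed

locale Dconstr =
  fixes A :: cmatrix and C :: real and N :: nat and val :: "idx \<Rightarrow> complex"
  assumes H: "HBprop A C N val" and phiX: "phi \<subseteq> lA A" and C: "C \<ge> 0"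
begin

definition odd_row :: "nat \<Rightarrow> nat \<Rightarrow> complex" where
  "odd_row n k = (val (1, n, 0) - 1) * A n k +
     (if n < N then (if k = n then val (0, n, 0) else 0) + theta val n k * A n k else 0)"

definition DD :: cmatrix where
  "DD r k = (if even r then A (r div 2) k else odd_row (r div 2) k)"

lemma beta1: "norm (val (1, n, 0) - 1) \<le> 2 * C + 1"
  using beta_bound[OF H phiX, of n] norm_triangle_ineq4[of "val (1, n, 0)" 1] by simp

definition rodd :: "nat \<Rightarrow> seq \<Rightarrow> complex" where
  "rodd n x = (val (1, n, 0) - 1) * rs A n x +
     (if n < N then val (0, n, 0) * x n + (\<Sum>k. theta val n k * (A n k * x k)) else 0)"

lemma odd_sums:
  assumes x: "x \<in> lA A"
  shows "(\<lambda>k. odd_row n k * x k) sums rodd n x"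
proof -
  have r: "(\<lambda>k. A n k * x k) sums rs A n x" unfolding rs_def by (rule summable_sums[OF lA_rows[OF x]])
  have part1: "(\<lambda>k. (val (1, n, 0) - 1) * (A n k * x k)) sums ((val (1, n, 0) - 1) * rs A n x)"
    by (rule sums_mult[OF r])
  show ?thesis
  proof (cases "n < N")
    case True
    have s2: "(\<lambda>k. if k = n then val (0, n, 0) * x k else 0) sums (val (0, n, 0) * x n)"
      using sums_single[of n "\<lambda>k. val (0, n, 0) * x k"] by simp
    have s3: "(\<lambda>k. theta val n k * (A n k * x k)) sums (\<Sum>k. theta val n k * (A n k * x k))"
      by (intro summable_sums abel_summable theta_bv[OF H phiX C True] lA_rows[OF x])
    have "(\<lambda>k. (val (1, n, 0) - 1) * (A n k * x k) + ((if k = n then val (0, n, 0) * x k else 0)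
           + theta val n k * (A n k * x k))) sums
          ((val (1, n, 0) - 1) * rs A n x + (val (0, n, 0) * x n + (\<Sum>k. theta val n k * (A n k * x k))))"
      by (intro sums_add part1 s2 s3)
    moreover have "(\<lambda>k. odd_row n k * x k) = (\<lambda>k. (val (1, n, 0) - 1) * (A n k * x k) + ((if k = n then val (0, n, 0) * x k else 0)
           + theta val n k * (A n k * x k)))"
      using True by (auto simp: odd_row_def algebra_simps)
    ultimately show ?thesis using True by (simp add: rodd_def)
  next
    case False
    then show ?thesis using part1 by (simp add: odd_row_def rodd_def mult.assoc)
  qed
qed

lemma rs_DD: assumes "x \<in> lA A"
  shows "rs DD r x = (if even r then rs A (r div 2) x else rodd (r div 2) x)"
proof (cases "even r")
  case True then show ?thesis by (simp add: rs_def DD_def)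
next
  case False
  then have "rs DD r x = (\<Sum>k. odd_row (r div 2) k * x k)" by (simp add: rs_def DD_def)
  then show ?thesis using False odd_sums[OF assms, of "r div 2"] by (simp add: sums_iff)
qed

lemma rodd_summable: assumes x: "x \<in> lA A"
  shows "summable (\<lambda>n. norm (rodd n x))"
proof (rule summable_comparison_test'[OF summable_mult[OF lA_T[OF x], of "2 * C + 1"], of N])
  fix n assume "N \<le> n"
  then have "rodd n x = (val (1, n, 0) - 1) * rs A n x" by (simp add: rodd_def)
  then show "norm (norm (rodd n x)) \<le> (2 * C + 1) * norm (rs A n x)"
    using beta1[of n] by (simp add: norm_mult mult_right_mono)
qed

lemma lA_DD: "lA DD = lA A"
proof
  show "lA A \<subseteq> lA DD"
  proof
    fix x assume x: "x \<in> lA A"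
    have rows: "summable (\<lambda>k. DD r k * x k)" for r
    proof (cases "even r")
      case True then show ?thesis using lA_rows[OF x, of "r div 2"] by (simp add: DD_def)
    next
      case False then show ?thesis using odd_sums[OF x, of "r div 2"] by (simp add: DD_def sums_iff)
    qed
    have "summable (\<lambda>r. norm (if even r then rs A (r div 2) x else rodd (r div 2) x))"
      by (rule interleave(1)[OF lA_T[OF x] rodd_summable[OF x]])
    then have "summable (\<lambda>r. norm (rs DD r x))" by (simp add: rs_DD[OF x])
    then show "x \<in> lA DD" using rows by (simp add: lA_iff)
  qed
  show "lA DD \<subseteq> lA A"
  proof
    fix x assume x: "x \<in> lA DD"
    have rows: "summable (\<lambda>k. A n k * x k)" for n
      using lA_rows[OF x, of "2 * n"] by (simp add: DD_def)
    have eq: "rs DD (2 * n) x = rs A n x" for n by (simp add: rs_def DD_def)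
    have "summable (\<lambda>n. norm (rs DD (2 * n) x))"
      by (rule even_sub_summable[OF lA_T[OF x]]) simp
    then show "x \<in> lA A" using rows by (simp add: lA_iff eq)
  qed
qed

lemma col_DD: "(\<lambda>r. DD r k) sums 1"
proof -
  define e where "e n = (if n < N then (if k = n then val (0, n, 0) else 0) + theta val n k * A n k else 0)" for n
  have na: "summable (\<lambda>n. norm (A n k))" by (rule col_abs_summable[OF phiX])
  have ng: "summable (\<lambda>n. norm (odd_row n k))"
  proof (rule summable_comparison_test'[OF summable_mult[OF na, of "2 * C + 1"], of N])
    fix n assume "N \<le> n"
    then have "odd_row n k = (val (1, n, 0) - 1) * A n k" by (simp add: odd_row_def)
    then show "norm (norm (odd_row n k)) \<le> (2 * C + 1) * norm (A n k)"
      using beta1[of n] by (simp add: norm_mult mult_right_mono)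
  qed
  have sb: "summable (\<lambda>n. A n k * val (1, n, 0))"
    by (rule summable_norm_cancel[OF beta_summable[OF H phiX]])
  have sa: "summable (\<lambda>n. A n k)" by (rule summable_norm_cancel[OF na])
  have se: "summable e" by (rule summable_finite[of "{..<N}"]) (auto simp: e_def)
  have sbm: "summable (\<lambda>n. (val (1, n, 0) - 1) * A n k)"
  proof -
    have "(\<lambda>n. (val (1, n, 0) - 1) * A n k) = (\<lambda>n. A n k * val (1, n, 0) - A n k)"
      by (auto simp: algebra_simps)
    then show ?thesis using summable_diff[OF sb sa] by simp
  qed
  have "suminf e = (\<Sum>n<N. e n)" by (rule suminf_finite) (auto simp: e_def)
  also have "\<dots> = (if k < N then val (0, k, 0) else 0) + (\<Sum>n<N. A n k * theta val n k)"
    by (simp add: e_def sum.distrib mult.commute)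
  finally have sume: "suminf e = (if k < N then val (0, k, 0) else 0) + (\<Sum>n<N. A n k * theta val n k)" .
  have "(\<Sum>n. odd_row n k) = (\<Sum>n. (val (1, n, 0) - 1) * A n k + e n)"
    by (simp add: odd_row_def e_def)
  also have "\<dots> = (\<Sum>n. (val (1, n, 0) - 1) * A n k) + suminf e"
    by (rule suminf_add[OF sbm se, symmetric])
  also have "(\<Sum>n. (val (1, n, 0) - 1) * A n k) = (\<Sum>n. A n k * val (1, n, 0)) - (\<Sum>n. A n k)"
  proof -
    have "(\<Sum>n. A n k * val (1, n, 0)) - (\<Sum>n. A n k) = (\<Sum>n. A n k * val (1, n, 0) - A n k)"
      by (rule suminf_diff[OF sb sa])
    also have "\<dots> = (\<Sum>n. (val (1, n, 0) - 1) * A n k)" by (simp add: algebra_simps)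
    finally show ?thesis by simp
  qed
  finally have sumg: "(\<Sum>n. odd_row n k) = (\<Sum>n. A n k * val (1, n, 0)) - (\<Sum>n. A n k) + suminf e" .
  have "(\<lambda>r. if even r then A (r div 2) k else odd_row (r div 2) k) sums ((\<Sum>n. A n k) + (\<Sum>n. odd_row n k))"
    by (rule interleave(2)[OF na ng])
  moreover have "(\<Sum>n. A n k) + (\<Sum>n. odd_row n k) = 1"
    unfolding sumg sume using col_identity[OF H phiX C, of k] by (simp add: algebra_simps split: if_splits)
  ultimately show ?thesis by (simp add: DD_def)
qed

end

lemma converse:
  assumes pq: "\<And>n. p n < q n" and qinf: "filterlim q at_top sequentially"
    and phiX: "phi \<subseteq> lA A" and sub: "lA A \<subseteq> sigma_pq_s p q"
  shows "l_replaceable A"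
proof -
  obtain C0 N where CN: "\<forall>x\<in>phi. norm (suminf x) \<le> C0 * PP A N x"
    using phi_bound[OF pq qinf sub phiX] by blast
  define C where "C = \<bar>C0\<bar>"
  have C: "C \<ge> 0" by (simp add: C_def)
  have bnd: "\<forall>x\<in>phi. norm (suminf x) \<le> C * PP A N x"
  proof
    fix x assume x: "x \<in> phi"
    have "C0 * PP A N x \<le> C * PP A N x"
      using PP_nonneg[of x A N] x phiX unfolding C_def by (intro mult_right_mono) auto
    then show "norm (suminf x) \<le> C * PP A N x" using CN x by fastforce
  qed
  obtain val where val: "HBprop A C N val"
    using HB_applied[OF phiX C bnd] unfolding HBprop_def by blast
  interpret Dconstr A C N val by (unfold_locales) (rule val, rule phiX, rule C)
  show ?thesis unfolding l_replaceable_def using lA_DD col_DD by blast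
qed

theorem mainTheorem2:
  fixes A :: cmatrix and p q :: "nat \<Rightarrow> nat"
  assumes "\<And>n. p n < q n"
    and "filterlim q at_top sequentially"
    and "phi \<subseteq> lA A"
    and "DF_lA p q A = lA A"
  shows "l_replaceable A \<longleftrightarrow> lA A \<subseteq> sigma_pq_s p q"
  using forward[OF _ assms(4)] converse[OF assms(1,2,3)] by blast

end
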